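(* In the setting described in the context, the quantum dimension \[ \dim_1:=(\ ,\ )_1(g_1) \] satisfies, modulo $\lambda^2$, \[ \dim_1=n+\frac{\lambda}{2}\{g_{\mu\nu},g^{\mu\nu}\}=n+\frac{\lambda}{2}\,\omega^{\alpha\beta}g_{\mu\nu,\alpha}\,g^{\mu\nu}{}_{,\beta}, \] where $n=\dim M$.
   Context: Let $M$ be a smooth $n$-manifold with local coordinates $x^\mu$. Commas denote partial derivatives ($f_{,\alpha}=\partial_\alpha f$) and repeated indices are summed. $g_{\mu\nu}$ is a (pseudo-)Riemannian metric with inverse $g^{\mu\nu}$, which is used to raise and lower indices. $\widehat\Gamma^\alpha{}_{\beta\gamma}$ are its Levi-Civita Christoffel symbols and $\widehat\nabla$ is its Levi-Civita connection. $\nabla$ is a further linear connection with Christoffel symbols $\Gamma^\alpha{}_{\beta\gamma}$, in the convention $\nabla_\beta dx^\alpha=-\Gamma^\alpha{}_{\beta\gamma}dx^\gamma$. Thus $\nabla_\beta\eta_\alpha=\partial_\beta\eta_\alpha-\eta_\gamma\Gamma^\gamma{}_{\beta\alpha}$ and $\nabla_\beta V^\alpha=\partial_\beta V^\alpha+\Gamma^\alpha{}_{\beta\gamma}V^\gamma$, extended to all tensors in the usual way; a semicolon also denotes $\nabla$. The associated tensors are: - torsion $T^\alpha{}_{\beta\gamma}=\Gamma^\alpha{}_{\beta\gamma}-\Gamma^\alpha{}_{\gamma\beta}$; - curvature $R^\alpha{}_{\beta\gamma\delta}=\Gamma^\alpha{}_{\delta\beta,\gamma}-\Gamma^\alpha{}_{\gamma\beta,\delta}+\Gamma^\kappa{}_{\delta\beta}\Gamma^\alpha{}_{\gamma\kappa}-\Gamma^\kappa{}_{\gamma\beta}\Gamma^\alpha{}_{\delta\kappa}$;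 - contorsion $S^\alpha{}_{\beta\gamma}=\Gamma^\alpha{}_{\beta\gamma}-\widehat\Gamma^\alpha{}_{\beta\gamma}$; - lowered symbols $\Gamma_{\mu\beta\nu}=g_{\mu\kappa}\Gamma^\kappa{}_{\beta\nu}$. Standing assumptions: - $\nabla$ is metric compatible, $\nabla g=0$, equivalently $g_{\mu\nu,\beta}=\Gamma_{\mu\beta\nu}+\Gamma_{\nu\beta\mu}$. - $\omega^{\alpha\beta}=-\omega^{\beta\alpha}$ is a Poisson bivector (it satisfies the Jacobi identity), with $\{f,h\}=\omega^{\alpha\beta}f_{,\alpha}h_{,\beta}$. - $\nabla$ is Poisson-compatible: $\nabla_\gamma\omega^{\alpha\beta}+T^\alpha{}_{\delta\gamma}\omega^{\delta\beta}+T^\beta{}_{\delta\gamma}\omega^{\alpha\delta}=0$. $\lambda$ is a formal parameter and all identities are taken modulo $\lambda^2$. The quantised products, for functions $f,h$ and 1-forms $\eta$, are - $f\bullet h=fh+\frac\lambda2\{f,h\}$; - $f\bullet\eta=f\eta+\frac\lambda2\omega^{\alpha\beta}f_{,\alpha}\nabla_\beta\eta$; - $\eta\bullet f=\eta f-\frac\lambda2\omega^{\alpha\beta}f_{,\alpha}\nabla_\beta\eta$. Commutators are $[f,\eta]=f\bullet\eta-\eta\bullet f$. Quantum metric data: - $\otimes_1$ is the tensor product of 1-forms over the quantised function algebra, i.e. it satisfies $\eta\bullet f\otimes_1\zeta=\eta\otimes_1 f\bullet\zeta$. - $\mathcal R_{\mu\nu}=\frac12 g_{\alpha\beta}\omega^{\alpha\gamma}(\nabla_\gamma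 T^\beta{}_{\mu\nu}-R^\beta{}_{\mu\nu\gamma}+R^\beta{}_{\nu\mu\gamma})$. - $h_{\mu\nu}=\mathcal R_{\mu\nu}+\omega^{\alpha\beta}(\Gamma_{\mu\alpha\kappa}\Gamma^\kappa{}_{\beta\nu}+\Gamma^\gamma{}_{\alpha\mu}g_{\gamma\nu,\beta})$, which is antisymmetric. - $\tilde g_{\mu\nu}=g_{\mu\nu}+\frac\lambda2h_{\mu\nu}$, and the quantum metric is $g_1=dx^\mu\bullet\tilde g_{\mu\nu}\otimes_1dx^\nu$. - $\tilde g^{\mu\nu}$ is the $\bullet$-inverse matrix: $\tilde g_{\mu\nu}\bullet\tilde g^{\nu\gamma}=\delta_\mu^\gamma=\tilde g^{\gamma\nu}\bullet\tilde g_{\nu\mu}$. - $(\ ,\ )_1:\Omega^1\otimes_1\Omega^1\to C^\infty(M)$ is the bimodule map with $(dx^\mu,dx^\nu)_1=\tilde g^{\mu\nu}$ and $(f\bullet\eta,\zeta\bullet k)_1=f\bullet(\eta,\zeta)_1\bullet k$. *)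

theory Defs
  imports "HOL-Analysis.Analysis"
begin

text \<open>Everything is done in a single coordinate chart: an open set U in R^n,
 with the coordinate index type 'n (n = CARD('n)).  The formal parameter lambda is
 handled by working in C^infty[lambda]/(lambda^2): an element a0 + lambda a1
 is represented by the pair (a0, a1).  A 1-form is given by its coefficient
 functions eta_alpha (with eta = eta_alpha dx^alpha).\<close>

type_synonym 'n fn = "real^'n \<Rightarrow> real"
type_synonym 'n qf = "'n fn \<times> 'n fn"
type_synonym 'n form = "'n \<Rightarrow> 'n qf"

definition pd :: "'n::finite \<Rightarrow> 'n fn \<Rightarrow> 'n fn" where
  "pd i f x = frechet_derivative f (at x) (axis i 1)"

definition Cinf_on :: "(real^'n::finite) set \<Rightarrow> 'n fn \<Rightarrow> bool" where
  "Cinf_on U f \<longleftrightarrow> (\<forall>is::'n list. \<forall>x\<in>U. (foldr pd is f) differentiable (at x))"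

definition qsmooth :: "(real^'n::finite) set \<Rightarrow> 'n qf \<Rightarrow> bool" where
  "qsmooth U a \<longleftrightarrow> Cinf_on U (fst a) \<and> Cinf_on U (snd a)"

definition fsmooth :: "(real^'n::finite) set \<Rightarrow> 'n form \<Rightarrow> bool" where
  "fsmooth U \<eta> \<longleftrightarrow> (\<forall>\<alpha>. qsmooth U (\<eta> \<alpha>))"

definition qeqU :: "(real^'n::finite) set \<Rightarrow> 'n qf \<Rightarrow> 'n qf \<Rightarrow> bool" where
  "qeqU U a b \<longleftrightarrow> (\<forall>x\<in>U. fst a x = fst b x \<and> snd a x = snd b x)"

definition qadd :: "'n qf \<Rightarrow> 'n qf \<Rightarrow> 'n qf" where
  "qadd a b = ((\<lambda>x. fst a x + fst b x), (\<lambda>x. snd a x + snd b x))"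

definition qsum :: "('i \<Rightarrow> 'n qf) \<Rightarrow> 'i set \<Rightarrow> 'n qf" where
  "qsum F S = ((\<lambda>x. \<Sum>i\<in>S. fst (F i) x), (\<lambda>x. \<Sum>i\<in>S. snd (F i) x))"

definition fadd :: "'n form \<Rightarrow> 'n form \<Rightarrow> 'n form" where
  "fadd \<eta> \<zeta> = (\<lambda>\<alpha>. qadd (\<eta> \<alpha>) (\<zeta> \<alpha>))"

definition pbr :: "('n::finite \<Rightarrow> 'n \<Rightarrow> 'n fn) \<Rightarrow> 'n fn \<Rightarrow> 'n fn \<Rightarrow> 'n fn" where
  "pbr \<omega> f h x = (\<Sum>\<alpha>\<in>UNIV. \<Sum>\<beta>\<in>UNIV. \<omega> \<alpha> \<beta> x * pd \<alpha> f x * pd \<beta> h x)"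

text \<open>Quantised product of functions, f . h = fh + lambda/2 {f,h}  (mod lambda^2).\<close>
definition qmult :: "('n::finite \<Rightarrow> 'n \<Rightarrow> 'n fn) \<Rightarrow> 'n qf \<Rightarrow> 'n qf \<Rightarrow> 'n qf" where
  "qmult \<omega> a b =
     ((\<lambda>x. fst a x * fst b x),
      (\<lambda>x. fst a x * snd b x + snd a x * fst b x + 1/2 * pbr \<omega> (fst a) (fst b) x))"

definition cov1 :: "('n::finite \<Rightarrow> 'n \<Rightarrow> 'n \<Rightarrow> 'n fn) \<Rightarrow> 'n \<Rightarrow> ('n \<Rightarrow> 'n fn) \<Rightarrow> 'n \<Rightarrow> 'n fn" where
  "cov1 \<Gamma> \<beta> \<eta> \<gamma> x = pd \<beta> (\<eta> \<gamma>) x - (\<Sum>\<delta>\<in>UNIV. \<eta> \<delta> x * \<Gamma> \<delta> \<beta> \<gamma> x)"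

text \<open>f . eta = f eta + lambda/2 omega^{ab} f_{,a} nabla_b eta.\<close>
definition qlmult :: "('n::finite \<Rightarrow> 'n \<Rightarrow> 'n fn) \<Rightarrow> ('n \<Rightarrow> 'n \<Rightarrow> 'n \<Rightarrow> 'n fn)
    \<Rightarrow> 'n qf \<Rightarrow> 'n form \<Rightarrow> 'n form" where
  "qlmult \<omega> \<Gamma> f \<eta> = (\<lambda>\<gamma>.
     ((\<lambda>x. fst f x * fst (\<eta> \<gamma>) x),
      (\<lambda>x. fst f x * snd (\<eta> \<gamma>) x + snd f x * fst (\<eta> \<gamma>) x
         + 1/2 * (\<Sum>\<alpha>\<in>UNIV. \<Sum>\<beta>\<in>UNIV. \<omega> \<alpha> \<beta> x * pd \<alpha> (fst f) x
                     * cov1 \<Gamma> \<beta> (\<lambda>\<delta>. fst (\<eta> \<delta>)) \<gamma> x))))"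

text \<open>eta . f = eta f - lambda/2 omega^{ab} f_{,a} nabla_b eta.\<close>
definition qrmult :: "('n::finite \<Rightarrow> 'n \<Rightarrow> 'n fn) \<Rightarrow> ('n \<Rightarrow> 'n \<Rightarrow> 'n \<Rightarrow> 'n fn)
    \<Rightarrow> 'n form \<Rightarrow> 'n qf \<Rightarrow> 'n form" where
  "qrmult \<omega> \<Gamma> \<eta> f = (\<lambda>\<gamma>.
     ((\<lambda>x. fst f x * fst (\<eta> \<gamma>) x),
      (\<lambda>x. fst f x * snd (\<eta> \<gamma>) x + snd f x * fst (\<eta> \<gamma>) x
         - 1/2 * (\<Sum>\<alpha>\<in>UNIV. \<Sum>\<beta>\<in>UNIV. \<omega> \<alpha> \<beta> x * pd \<alpha> (fst f) x
                     * cov1 \<Gamma> \<beta> (\<lambda>\<delta>. fst (\<eta> \<delta>)) \<gamma> x))))"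

definition dx :: "'n \<Rightarrow> 'n form" where
  "dx \<mu> = (\<lambda>\<alpha>. if \<alpha> = \<mu> then ((\<lambda>x. 1), (\<lambda>x. 0)) else ((\<lambda>x. 0), (\<lambda>x. 0)))"

definition torsion :: "('n \<Rightarrow> 'n \<Rightarrow> 'n \<Rightarrow> 'n fn) \<Rightarrow> 'n \<Rightarrow> 'n \<Rightarrow> 'n \<Rightarrow> 'n fn" where
  "torsion \<Gamma> a b c x = \<Gamma> a b c x - \<Gamma> a c b x"

definition curv :: "('n::finite \<Rightarrow> 'n \<Rightarrow> 'n \<Rightarrow> 'n fn) \<Rightarrow> 'n \<Rightarrow> 'n \<Rightarrow> 'n \<Rightarrow> 'n \<Rightarrow> 'n fn" where
  "curv \<Gamma> a b c d x = pd c (\<Gamma> a d b) x - pd d (\<Gamma> a c b) x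
     + (\<Sum>\<kappa>\<in>UNIV. \<Gamma> \<kappa> d b x * \<Gamma> a c \<kappa> x - \<Gamma> \<kappa> c b x * \<Gamma> a d \<kappa> x)"

definition Glow :: "('n::finite \<Rightarrow> 'n \<Rightarrow> 'n fn) \<Rightarrow> ('n \<Rightarrow> 'n \<Rightarrow> 'n \<Rightarrow> 'n fn) \<Rightarrow> 'n \<Rightarrow> 'n \<Rightarrow> 'n \<Rightarrow> 'n fn" where
  "Glow g \<Gamma> m b n x = (\<Sum>k\<in>UNIV. g m k x * \<Gamma> k b n x)"

definition covT :: "('n::finite \<Rightarrow> 'n \<Rightarrow> 'n \<Rightarrow> 'n fn) \<Rightarrow> 'n \<Rightarrow> 'n \<Rightarrow> 'n \<Rightarrow> 'n \<Rightarrow> 'n fn" where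
  "covT \<Gamma> c b m n x = pd c (torsion \<Gamma> b m n) x
     + (\<Sum>\<kappa>\<in>UNIV. \<Gamma> b c \<kappa> x * torsion \<Gamma> \<kappa> m n x)
     - (\<Sum>\<kappa>\<in>UNIV. \<Gamma> \<kappa> c m x * torsion \<Gamma> b \<kappa> n x)
     - (\<Sum>\<kappa>\<in>UNIV. \<Gamma> \<kappa> c n x * torsion \<Gamma> b m \<kappa> x)"

definition Rq :: "('n::finite \<Rightarrow> 'n \<Rightarrow> 'n fn) \<Rightarrow> ('n \<Rightarrow> 'n \<Rightarrow> 'n fn) \<Rightarrow> ('n \<Rightarrow> 'n \<Rightarrow> 'n \<Rightarrow> 'n fn)
    \<Rightarrow> 'n \<Rightarrow> 'n \<Rightarrow> 'n fn" where
  "Rq g \<omega> \<Gamma> \<mu> \<nu> x = 1/2 * (\<Sum>\<alpha>\<in>UNIV. \<Sum>\<beta>\<in>UNIV. \<Sum>\<gamma>\<in>UNIV.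
      g \<alpha> \<beta> x * \<omega> \<alpha> \<gamma> x *
      (covT \<Gamma> \<gamma> \<beta> \<mu> \<nu> x - curv \<Gamma> \<beta> \<mu> \<nu> \<gamma> x + curv \<Gamma> \<beta> \<nu> \<mu> \<gamma> x))"

definition hq :: "('n::finite \<Rightarrow> 'n \<Rightarrow> 'n fn) \<Rightarrow> ('n \<Rightarrow> 'n \<Rightarrow> 'n fn) \<Rightarrow> ('n \<Rightarrow> 'n \<Rightarrow> 'n \<Rightarrow> 'n fn)
    \<Rightarrow> 'n \<Rightarrow> 'n \<Rightarrow> 'n fn" where
  "hq g \<omega> \<Gamma> \<mu> \<nu> x = Rq g \<omega> \<Gamma> \<mu> \<nu> x
     + (\<Sum>\<alpha>\<in>UNIV. \<Sum>\<beta>\<in>UNIV. \<omega> \<alpha> \<beta> x *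
         ((\<Sum>\<kappa>\<in>UNIV. Glow g \<Gamma> \<mu> \<alpha> \<kappa> x * \<Gamma> \<kappa> \<beta> \<nu> x)
          + (\<Sum>\<gamma>\<in>UNIV. \<Gamma> \<gamma> \<alpha> \<mu> x * pd \<beta> (g \<gamma> \<nu>) x)))"

definition gt :: "('n::finite \<Rightarrow> 'n \<Rightarrow> 'n fn) \<Rightarrow> ('n \<Rightarrow> 'n \<Rightarrow> 'n fn) \<Rightarrow> ('n \<Rightarrow> 'n \<Rightarrow> 'n \<Rightarrow> 'n fn)
    \<Rightarrow> 'n \<Rightarrow> 'n \<Rightarrow> 'n qf" where
  "gt g \<omega> \<Gamma> \<mu> \<nu> = (g \<mu> \<nu>, (\<lambda>x. 1/2 * hq g \<omega> \<Gamma> \<mu> \<nu> x))"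

end

theory Submission
  imports Defs
begin


lemma pd_cong:
  assumes "open U" "x \<in> U" "\<And>y. y \<in> U \<Longrightarrow> f y = g y"
  shows "pd i f x = pd i g x"
proof -
  have "(\<lambda>f'. (f has_derivative f') (at x)) = (\<lambda>f'. (g has_derivative f') (at x))"
  proof (rule ext, rule iffI)
    fix f' assume "(f has_derivative f') (at x)"
    then show "(g has_derivative f') (at x)"
      using has_derivative_transform_within_open[OF _ assms(1,2), of f f' UNIV g] assms(3) by simp
  next
    fix f' assume "(g has_derivative f') (at x)"
    then show "(f has_derivative f') (at x)"
      using has_derivative_transform_within_open[OF _ assms(1,2), of g f' UNIV f] assms(3) by simp
  qed
  then show ?thesis unfolding pd_def frechet_derivative_def by simp
qed

lemma pd_const[simp]: "pd i (\<lambda>x. c) x = 0"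
  unfolding pd_def by simp

lemma pd_add:
  assumes "f differentiable at x" "g differentiable at x"
  shows "pd i (\<lambda>y. f y + g y) x = pd i f x + pd i g x"
proof -
  have "((\<lambda>y. f y + g y) has_derivative (\<lambda>h. frechet_derivative f (at x) h + frechet_derivative g (at x) h)) (at x)"
    using assms by (intro has_derivative_add) (auto simp: frechet_derivative_works[symmetric])
  from frechet_derivative_at[OF this, symmetric] show ?thesis unfolding pd_def by simp
qed

lemma pd_mult:
  assumes "f differentiable at x" "g differentiable at x"
  shows "pd i (\<lambda>y. f y * g y) x = pd i f x * g x + f x * pd i g x"
proof -
  have "((\<lambda>y. f y * g y) has_derivative (\<lambda>h. f x * frechet_derivative g (at x) h + frechet_derivative f (at x) h * g x)) (at x)"
    using assms by (intro has_derivative_mult) (auto simp: frechet_derivative_works[symmetric])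
  from frechet_derivative_at[OF this, symmetric] show ?thesis unfolding pd_def
    by (simp add: algebra_simps)
qed

lemma differentiable_sum_fun:
  "finite S \<Longrightarrow> (\<And>i. i \<in> S \<Longrightarrow> F i differentiable at x) \<Longrightarrow> (\<lambda>y. \<Sum>i\<in>S. F i y) differentiable at x"
  by (induction S rule: finite_induct) auto

lemma pd_sum:
  assumes "finite S" "\<And>i. i \<in> S \<Longrightarrow> F i differentiable at x"
  shows "pd j (\<lambda>y. \<Sum>i\<in>S. F i y) x = (\<Sum>i\<in>S. pd j (F i) x)"
  using assms
proof (induction S rule: finite_induct)
  case empty then show ?case by simp
next
  case (insert a S)
  have "pd j (\<lambda>y. \<Sum>i\<in>insert a S. F i y) x = pd j (\<lambda>y. F a y + (\<Sum>i\<in>S. F i y)) x"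
    using insert by simp
  also have "\<dots> = pd j (F a) x + pd j (\<lambda>y. \<Sum>i\<in>S. F i y) x"
    using insert by (intro pd_add differentiable_sum_fun) auto
  finally show ?case using insert by simp
qed

fun Ck :: "(real^'n::finite) set \<Rightarrow> nat \<Rightarrow> 'n fn \<Rightarrow> bool" where
  "Ck U 0 f = (\<forall>x\<in>U. f differentiable at x)"
| "Ck U (Suc n) f = ((\<forall>x\<in>U. f differentiable at x) \<and> (\<forall>j. Ck U n (pd j f)))"

lemma Ck_diff: "Ck U n f \<Longrightarrow> x \<in> U \<Longrightarrow> f differentiable at x"
  by (cases n) auto

lemma Ck_Suc_imp: "Ck U (Suc n) f \<Longrightarrow> Ck U n f"
  by (induction n arbitrary: f) auto

lemma Cinf_Ck: "Cinf_on U f \<longleftrightarrow> (\<forall>n. Ck U n f)"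
proof
  assume "Cinf_on U f"
  then show "\<forall>n. Ck U n f"
  proof (intro allI)
    fix n show "Cinf_on U f \<Longrightarrow> Ck U n f"
    proof (induction n arbitrary: f)
      case 0 then show ?case unfolding Cinf_on_def by (auto dest: spec[of _ "[]"])
    next
      case (Suc n)
      have "Cinf_on U (pd j f)" for j
      proof -
        have e: "foldr pd is (pd j f) = foldr pd (is@[j]) f" for "is" by simp
        show ?thesis using Suc.prems unfolding Cinf_on_def e by blast
      qed
      moreover have "\<forall>x\<in>U. f differentiable at x" using Suc.prems unfolding Cinf_on_def
        by (auto dest: spec[of _ "[]"])
      ultimately show ?case using Suc.IH by simp
    qed
  qed
next
  assume A: "\<forall>n. Ck U n f"
  have "\<forall>f. (\<forall>n. Ck U n f) \<longrightarrow> (\<forall>x\<in>U. (foldr pd is f) differentiable (at x))" for "is"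
  proof (induction "is" rule: rev_induct)
    case Nil then show ?case by (auto dest: spec[of _ 0])
  next
    case (snoc j js)
    show ?case
    proof (intro allI impI)
      fix f assume "\<forall>n. Ck U n f"
      then have "\<forall>n. Ck U n (pd j f)" using Ck.simps(2)[of U _ f] by blast
      then show "\<forall>x\<in>U. foldr pd (js @ [j]) f differentiable at x" using snoc by simp
    qed
  qed
  then show "Cinf_on U f" using A unfolding Cinf_on_def by blast
qed

lemma differentiable_cong_open:
  "open U \<Longrightarrow> x \<in> U \<Longrightarrow> (\<And>y. y \<in> U \<Longrightarrow> f y = g y) \<Longrightarrow> f differentiable at x \<Longrightarrow> g differentiable at x"
  unfolding differentiable_def using has_derivative_transform_within_open by blast

lemma Ck_cong: "open U \<Longrightarrow> (\<And>y. y \<in> U \<Longrightarrow> f y = g y) \<Longrightarrow> Ck U n f \<Longrightarrow> Ck U n g"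
proof (induction n arbitrary: f g)
  case 0 then show ?case using differentiable_cong_open[of U _ f g] by simp
next
  case (Suc n)
  have "Ck U n (pd j g)" for j
  proof (rule Suc.IH[of "pd j f" "pd j g"])
    show "open U" by fact
    show "Ck U n (pd j f)" using Suc.prems(3) by simp
    show "\<And>y. y \<in> U \<Longrightarrow> pd j f y = pd j g y"
      using pd_cong[OF Suc.prems(1), of _ f g] Suc.prems(2) by blast
  qed
  moreover have "\<forall>x\<in>U. g differentiable at x"
    using Suc.prems differentiable_cong_open[of U _ f g] by simp
  ultimately show ?case by simp
qed

lemma Ck_const: "Ck U n (\<lambda>x. c)"
proof (induction n arbitrary: c)
  case 0 then show ?case by simp
next
  case (Suc n)
  have e: "pd j (\<lambda>x. c) = (\<lambda>x. 0)" for j by (simp add: fun_eq_iff)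
  show ?case unfolding Ck.simps e using Suc.IH[of 0] by simp
qed

lemma Ck_add: "open U \<Longrightarrow> Ck U n f \<Longrightarrow> Ck U n g \<Longrightarrow> Ck U n (\<lambda>x. f x + g x)"
proof (induction n arbitrary: f g)
  case 0 then show ?case by auto
next
  case (Suc n)
  have "Ck U n (pd j (\<lambda>x. f x + g x))" for j
  proof (rule Ck_cong[OF \<open>open U\<close>])
    show "Ck U n (\<lambda>x. pd j f x + pd j g x)" using Suc.IH[of "pd j f" "pd j g"] Suc.prems by simp
    show "\<And>y. y \<in> U \<Longrightarrow> pd j f y + pd j g y = pd j (\<lambda>x. f x + g x) y"
      using Suc.prems by (subst pd_add) (auto intro: Ck_diff)
  qed
  moreover have "\<forall>x\<in>U. (\<lambda>x. f x + g x) differentiable at x" using Suc.prems by simp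
  ultimately show ?case by simp
qed

lemma Ck_mult: "open U \<Longrightarrow> Ck U n f \<Longrightarrow> Ck U n g \<Longrightarrow> Ck U n (\<lambda>x. f x * g x)"
proof (induction n arbitrary: f g)
  case 0 then show ?case by auto
next
  case (Suc n)
  have "Ck U n (pd j (\<lambda>x. f x * g x))" for j
  proof (rule Ck_cong[OF \<open>open U\<close>])
    have "Ck U n f" "Ck U n g" using Suc.prems Ck_Suc_imp by blast+
    moreover have "Ck U n (pd j f)" "Ck U n (pd j g)" using Suc.prems by simp_all
    ultimately show "Ck U n (\<lambda>x. pd j f x * g x + f x * pd j g x)"
      using Suc.IH[of "pd j f" g] Suc.IH[of f "pd j g"] Suc.prems(1)
      by (intro Ck_add) simp_all
    show "\<And>y. y \<in> U \<Longrightarrow> pd j f y * g y + f y * pd j g y = pd j (\<lambda>x. f x * g x) y"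
      using Suc.prems by (subst pd_mult) (auto intro: Ck_diff)
  qed
  moreover have "\<forall>x\<in>U. (\<lambda>x. f x * g x) differentiable at x" using Suc.prems by simp
  ultimately show ?case by simp
qed

lemma Cinf_const[intro]: "Cinf_on U (\<lambda>x. c)"
  by (simp add: Cinf_Ck Ck_const)

lemma Cinf_add[intro]: "open U \<Longrightarrow> Cinf_on U f \<Longrightarrow> Cinf_on U g \<Longrightarrow> Cinf_on U (\<lambda>x. f x + g x)"
  by (simp add: Cinf_Ck Ck_add)

lemma Cinf_mult[intro]: "open U \<Longrightarrow> Cinf_on U f \<Longrightarrow> Cinf_on U g \<Longrightarrow> Cinf_on U (\<lambda>x. f x * g x)"
  by (simp add: Cinf_Ck Ck_mult)

lemma Cinf_minus[intro]: "open U \<Longrightarrow> Cinf_on U f \<Longrightarrow> Cinf_on U g \<Longrightarrow> Cinf_on U (\<lambda>x. f x - g x)"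
proof -
  assume a: "open U" "Cinf_on U f" "Cinf_on U g"
  have "Cinf_on U (\<lambda>x. f x + (-1) * g x)" using a by (intro Cinf_add Cinf_mult Cinf_const) auto
  then show ?thesis by simp
qed

lemma Cinf_neg[intro]: "open U \<Longrightarrow> Cinf_on U g \<Longrightarrow> Cinf_on U (\<lambda>x. - g x)"
proof -
  assume a: "open U" "Cinf_on U g"
  have "Cinf_on U (\<lambda>x. (-1) * g x)" using a by (intro Cinf_mult Cinf_const) auto
  then show ?thesis by simp
qed

lemma Cinf_pd[intro]: "Cinf_on U f \<Longrightarrow> Cinf_on U (pd j f)"
  unfolding Cinf_Ck using Ck.simps(2)[of U _ f] by blast

lemma Cinf_pd'[intro]: "Cinf_on U f \<Longrightarrow> Cinf_on U (\<lambda>x. pd j f x)"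
  using Cinf_pd by auto

lemma Cinf_sum[intro]: "open U \<Longrightarrow> finite S \<Longrightarrow> (\<And>i. Cinf_on U (F i)) \<Longrightarrow> Cinf_on U (\<lambda>x. \<Sum>i\<in>S. F i x)"
proof -
  assume o: "open U" and f: "finite S" and c: "\<And>i. Cinf_on U (F i)"
  from f show ?thesis
    by (induction S rule: finite_induct) (auto simp: Cinf_const intro!: Cinf_add o c)
qed

lemma Cinf_diff: "Cinf_on U f \<Longrightarrow> x \<in> U \<Longrightarrow> f differentiable at x"
  unfolding Cinf_Ck using Ck_diff by blast

lemma Cinf_if[intro]: "Cinf_on U f \<Longrightarrow> Cinf_on U (\<lambda>x. if P then f x else 0)"
  by (cases P) auto



lemma torsion_fun: "torsion \<Gamma> a b c = (\<lambda>x. \<Gamma> a b c x - \<Gamma> a c b x)"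
  by (simp add: fun_eq_iff torsion_def)
lemma curv_fun: "curv \<Gamma> a b c d = (\<lambda>x. pd c (\<Gamma> a d b) x - pd d (\<Gamma> a c b) x
     + (\<Sum>\<kappa>\<in>UNIV. \<Gamma> \<kappa> d b x * \<Gamma> a c \<kappa> x - \<Gamma> \<kappa> c b x * \<Gamma> a d \<kappa> x))"
  by (simp add: fun_eq_iff curv_def)
lemma Glow_fun: "Glow g \<Gamma> m b n = (\<lambda>x. \<Sum>k\<in>UNIV. g m k x * \<Gamma> k b n x)"
  by (simp add: fun_eq_iff Glow_def)
lemma covT_fun: "covT \<Gamma> c b m n = (\<lambda>x. pd c (torsion \<Gamma> b m n) x
     + (\<Sum>\<kappa>\<in>UNIV. \<Gamma> b c \<kappa> x * torsion \<Gamma> \<kappa> m n x)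
     - (\<Sum>\<kappa>\<in>UNIV. \<Gamma> \<kappa> c m x * torsion \<Gamma> b \<kappa> n x)
     - (\<Sum>\<kappa>\<in>UNIV. \<Gamma> \<kappa> c n x * torsion \<Gamma> b m \<kappa> x))"
  by (simp add: fun_eq_iff covT_def)
lemma Rq_fun: "Rq g \<omega> \<Gamma> \<mu> \<nu> = (\<lambda>x. 1/2 * (\<Sum>\<alpha>\<in>UNIV. \<Sum>\<beta>\<in>UNIV. \<Sum>\<gamma>\<in>UNIV.
      g \<alpha> \<beta> x * \<omega> \<alpha> \<gamma> x *
      (covT \<Gamma> \<gamma> \<beta> \<mu> \<nu> x - curv \<Gamma> \<beta> \<mu> \<nu> \<gamma> x + curv \<Gamma> \<beta> \<nu> \<mu> \<gamma> x)))"
  by (simp add: fun_eq_iff Rq_def)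
lemma hq_fun: "hq g \<omega> \<Gamma> \<mu> \<nu> = (\<lambda>x. Rq g \<omega> \<Gamma> \<mu> \<nu> x
     + (\<Sum>\<alpha>\<in>UNIV. \<Sum>\<beta>\<in>UNIV. \<omega> \<alpha> \<beta> x *
         ((\<Sum>\<kappa>\<in>UNIV. Glow g \<Gamma> \<mu> \<alpha> \<kappa> x * \<Gamma> \<kappa> \<beta> \<nu> x)
          + (\<Sum>\<gamma>\<in>UNIV. \<Gamma> \<gamma> \<alpha> \<mu> x * pd \<beta> (g \<gamma> \<nu>) x))))"
  by (simp add: fun_eq_iff hq_def)

lemmas Cinf_rules = Cinf_add Cinf_mult Cinf_minus Cinf_neg Cinf_sum Cinf_pd Cinf_const Cinf_if

lemma smooth_hq:
  fixes U :: "(real^'n::finite) set"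
  assumes o: "open U"
    and g: "\<And>\<mu> \<nu>. Cinf_on U (g \<mu> \<nu>)"
    and w: "\<And>\<alpha> \<beta>. Cinf_on U (\<omega> \<alpha> \<beta>)"
    and G: "\<And>\<alpha> \<beta> \<gamma>. Cinf_on U (\<Gamma> \<alpha> \<beta> \<gamma>)"
  shows "Cinf_on U (hq g \<omega> \<Gamma> \<mu> \<nu>)"
proof -
  have T: "Cinf_on U (torsion \<Gamma> a b c)" for a b c
    unfolding torsion_fun by (intro Cinf_rules o G; simp)
  have C: "Cinf_on U (curv \<Gamma> a b c d)" for a b c d
    unfolding curv_fun by (intro Cinf_rules o G finite_UNIV; simp)
  have L: "Cinf_on U (Glow g \<Gamma> a b c)" for a b c
    unfolding Glow_fun by (intro Cinf_rules o G g finite_UNIV; simp)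
  have CT: "Cinf_on U (covT \<Gamma> a b c d)" for a b c d
    unfolding covT_fun by (intro Cinf_rules o G T finite_UNIV; simp)
  have R: "Cinf_on U (Rq g \<omega> \<Gamma> a b)" for a b
    unfolding Rq_fun by (intro Cinf_rules o G g w CT C finite_UNIV; simp)
  show ?thesis
    unfolding hq_fun by (intro Cinf_rules o G g w R L finite_UNIV; simp)
qed



lemma fst_dx[simp]: "fst (dx \<mu> \<kappa>) = (\<lambda>x. if \<kappa> = \<mu> then 1 else 0)" by (simp add: dx_def)
lemma snd_dx[simp]: "snd (dx \<mu> \<kappa>) = (\<lambda>x. 0)" by (simp add: dx_def)

lemma cov1_dx: "cov1 \<Gamma> \<beta> (\<lambda>\<delta>. fst (dx \<gamma> \<delta>)) \<kappa> x = - \<Gamma> \<gamma> \<beta> \<kappa> x"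
proof -
  have e: "(if P then 1 else 0) * t = (if P then t else (0::real))" for P t by simp
  show ?thesis by (simp add: cov1_def e)
qed

lemma cov1_dx': "cov1 \<Gamma> \<beta> (\<lambda>\<delta> x. if \<delta> = \<gamma> then 1 else 0) \<kappa> x = - \<Gamma> \<gamma> \<beta> \<kappa> x"
  using cov1_dx[of \<Gamma> \<beta> \<gamma> \<kappa> x] by simp

lemma cov1_fun: "cov1 \<Gamma> \<beta> \<eta> \<gamma> = (\<lambda>x. pd \<beta> (\<eta> \<gamma>) x - (\<Sum>\<delta>\<in>UNIV. \<eta> \<delta> x * \<Gamma> \<delta> \<beta> \<gamma> x))"
  by (simp add: fun_eq_iff cov1_def)

lemma fsmooth_dx: "fsmooth U (dx \<mu>)"
  by (simp add: fsmooth_def qsmooth_def Cinf_const)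

lemma fsmooth_qlmult:
  fixes U :: "(real^'n::finite) set"
  assumes o: "open U"
    and w: "\<And>\<alpha> \<beta>. Cinf_on U (\<omega> \<alpha> \<beta>)"
    and G: "\<And>\<alpha> \<beta> \<gamma>. Cinf_on U (\<Gamma> \<alpha> \<beta> \<gamma>)"
    and f: "qsmooth U f" and e: "fsmooth U \<eta>"
  shows "fsmooth U (qlmult \<omega> \<Gamma> f \<eta>)"
proof -
  have f1: "Cinf_on U (fst f)" "Cinf_on U (snd f)" using f by (auto simp: qsmooth_def)
  have e1: "Cinf_on U (fst (\<eta> a))" "Cinf_on U (snd (\<eta> a))" for a using e by (auto simp: qsmooth_def fsmooth_def)
  have c: "Cinf_on U (cov1 \<Gamma> b (\<lambda>\<delta>. fst (\<eta> \<delta>)) a)" for a b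
    unfolding cov1_fun by (intro Cinf_rules o G e1; simp)
  have "Cinf_on U (fst (qlmult \<omega> \<Gamma> f \<eta> a))" for a
    unfolding qlmult_def fst_conv by (intro Cinf_rules o G w c e1 f1; simp)
  moreover have "Cinf_on U (snd (qlmult \<omega> \<Gamma> f \<eta> a))" for a
    unfolding qlmult_def snd_conv by (intro Cinf_rules o G w c e1 f1 Cinf_pd; simp)
  ultimately show ?thesis unfolding fsmooth_def qsmooth_def by blast
qed

definition fs :: "('i \<Rightarrow> 'n form) \<Rightarrow> 'i set \<Rightarrow> 'n form" where
  "fs F S = (\<lambda>\<kappa>. qsum (\<lambda>\<gamma>. F \<gamma> \<kappa>) S)"

definition zf :: "'n form" where "zf = (\<lambda>\<kappa>. ((\<lambda>x. 0), (\<lambda>x. 0)))"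

lemma fs_empty: "fs F {} = zf" by (simp add: fs_def zf_def qsum_def)
lemma fs_insert: "finite S \<Longrightarrow> a \<notin> S \<Longrightarrow> fs F (insert a S) = fadd (F a) (fs F S)"
  by (simp add: fs_def fadd_def qadd_def qsum_def fun_eq_iff)

lemma fsmooth_fs:
  assumes o: "open U" and "finite S" and "\<And>\<gamma>. \<gamma> \<in> S \<Longrightarrow> fsmooth U (F \<gamma>)"
  shows "fsmooth U (fs F S)"
  using assms(2,3)
proof (induction S rule: finite_induct)
  case empty then show ?case by (simp add: fs_empty zf_def fsmooth_def qsmooth_def Cinf_const)
next
  case (insert a S)
  have "fsmooth U (fadd (F a) (fs F S))"
    using insert unfolding fsmooth_def qsmooth_def fadd_def qadd_def
    by (auto intro!: Cinf_add o)
  then show ?case using insert by (simp add: fs_insert)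
qed

lemma qeqU_refl: "qeqU U a a" by (simp add: qeqU_def)
lemma qeqU_sym: "qeqU U a b \<Longrightarrow> qeqU U b a" by (simp add: qeqU_def)
lemma qeqU_trans: "qeqU U a b \<Longrightarrow> qeqU U b c \<Longrightarrow> qeqU U a c" by (simp add: qeqU_def)
lemma qsum_cong: "(\<And>i. i \<in> S \<Longrightarrow> qeqU U (F i) (G i)) \<Longrightarrow> qeqU U (qsum F S) (qsum G S)"
  by (simp add: qeqU_def qsum_def)

lemma B_zero:
  fixes B :: "'n::finite form \<Rightarrow> 'n form \<Rightarrow> 'n qf"
  assumes addL: "\<And>\<eta> \<eta>' \<zeta>. fsmooth U \<eta> \<Longrightarrow> fsmooth U \<eta>' \<Longrightarrow> fsmooth U \<zeta> \<Longrightarrow>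
          qeqU U (B (fadd \<eta> \<eta>') \<zeta>) (qadd (B \<eta> \<zeta>) (B \<eta>' \<zeta>))"
    and z: "fsmooth U \<zeta>"
  shows "qeqU U (B zf \<zeta>) ((\<lambda>x. 0), (\<lambda>x. 0))"
proof -
  have zs: "fsmooth U (zf::'n form)" by (simp add: zf_def fsmooth_def qsmooth_def Cinf_const)
  have "fadd zf zf = (zf::'n form)" by (simp add: zf_def fadd_def qadd_def)
  then have "qeqU U (B zf \<zeta>) (qadd (B zf \<zeta>) (B zf \<zeta>))" using addL[OF zs zs z] by simp
  then show ?thesis by (simp add: qeqU_def qadd_def)
qed

lemma B_fs:
  fixes B :: "'n::finite form \<Rightarrow> 'n form \<Rightarrow> 'n qf"
  assumes addL: "\<And>\<eta> \<eta>' \<zeta>. fsmooth U \<eta> \<Longrightarrow> fsmooth U \<eta>' \<Longrightarrow> fsmooth U \<zeta> \<Longrightarrow>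
          qeqU U (B (fadd \<eta> \<eta>') \<zeta>) (qadd (B \<eta> \<zeta>) (B \<eta>' \<zeta>))"
    and z: "fsmooth U \<zeta>" and o: "open U"
    and S: "finite S" and F: "\<And>\<gamma>. \<gamma> \<in> S \<Longrightarrow> fsmooth U (F \<gamma>)"
  shows "qeqU U (B (fs F S) \<zeta>) (qsum (\<lambda>\<gamma>. B (F \<gamma>) \<zeta>) S)"
  using S F
proof (induction S rule: finite_induct)
  case empty
  then show ?case using B_zero[of U B \<zeta>, OF addL z] by (simp add: fs_empty qsum_def)
next
  case (insert a S)
  have fsS: "fsmooth U (fs F S)" using insert by (intro fsmooth_fs o) auto
  have "qeqU U (B (fs F (insert a S)) \<zeta>) (qadd (B (F a) \<zeta>) (B (fs F S) \<zeta>))"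
    using addL[of "F a" "fs F S" \<zeta>] fsS z insert by (simp add: fs_insert)
  moreover have "qeqU U (B (fs F S) \<zeta>) (qsum (\<lambda>\<gamma>. B (F \<gamma>) \<zeta>) S)" using insert by simp
  ultimately show ?case using insert by (simp add: qeqU_def qadd_def qsum_def)
qed

definition one :: "'n qf" where "one = ((\<lambda>x. 1), (\<lambda>x. 0))"

lemma qsmooth_one: "qsmooth U one" by (simp add: one_def qsmooth_def Cinf_const)

lemma qrmult_one: "qrmult \<omega> \<Gamma> \<eta> one = \<eta>"
  by (simp add: qrmult_def one_def fun_eq_iff)

lemma qmult_one: "qmult \<omega> a one = a"
  by (simp add: qmult_def one_def pbr_def fun_eq_iff)

lemma pbr_cong2:
  assumes "open U" "x \<in> U" "\<And>y. y \<in> U \<Longrightarrow> h y = h' y"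
  shows "pbr \<omega> f h x = pbr \<omega> f h' x"
  unfolding pbr_def using pd_cong[OF assms(1,2), of h h'] assms(3) by simp

lemma pbr_cong1:
  assumes "open U" "x \<in> U" "\<And>y. y \<in> U \<Longrightarrow> f y = f' y"
  shows "pbr \<omega> f h x = pbr \<omega> f' h x"
  unfolding pbr_def using pd_cong[OF assms(1,2), of f f'] assms(3) by simp

lemma qmult_cong2:
  assumes "open U" "qeqU U b b'"
  shows "qeqU U (qmult \<omega> a b) (qmult \<omega> a b')"
  using assms pbr_cong2[OF assms(1), of _ "fst b" "fst b'"]
  unfolding qeqU_def qmult_def by auto

lemma pd_if: "pd \<alpha> (\<lambda>x. if P then f x else 0) y = (if P then pd \<alpha> f y else 0)"
  by (cases P) simp_all

lemma pbr_if: "pbr \<omega> (\<lambda>x. if P then f x else 0) h y = (if P then pbr \<omega> f h y else 0)"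
  by (cases P) (simp_all add: pbr_def)



definition cc :: "('n::finite \<Rightarrow> 'n \<Rightarrow> 'n fn) \<Rightarrow> ('n \<Rightarrow> 'n \<Rightarrow> 'n fn) \<Rightarrow> ('n \<Rightarrow> 'n \<Rightarrow> 'n \<Rightarrow> 'n fn)
    \<Rightarrow> 'n \<Rightarrow> 'n \<Rightarrow> 'n \<Rightarrow> 'n qf" where
  "cc g \<omega> \<Gamma> \<mu> \<nu> \<gamma> = ((\<lambda>x. if \<gamma> = \<mu> then g \<mu> \<nu> x else 0),
     (\<lambda>x. (if \<gamma> = \<mu> then 1/2 * hq g \<omega> \<Gamma> \<mu> \<nu> x else 0)
          + (\<Sum>\<alpha>\<in>UNIV. \<Sum>\<beta>\<in>UNIV. \<omega> \<alpha> \<beta> x * pd \<alpha> (g \<mu> \<nu>) x * \<Gamma> \<mu> \<beta> \<gamma> x)))"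

lemma form_id:
  "qrmult \<omega> \<Gamma> (dx \<mu>) (gt g \<omega> \<Gamma> \<mu> \<nu>) = fs (\<lambda>\<gamma>. qlmult \<omega> \<Gamma> (cc g \<omega> \<Gamma> \<mu> \<nu> \<gamma>) (dx \<gamma>)) UNIV"
proof (rule ext, rule prod_eqI; rule ext)
  fix \<kappa> x
  have e: "(if P then 1 else 0) * t = (if P then t else (0::real))" for P t by simp
  show "fst (qrmult \<omega> \<Gamma> (dx \<mu>) (gt g \<omega> \<Gamma> \<mu> \<nu>) \<kappa>) x = fst (fs (\<lambda>\<gamma>. qlmult \<omega> \<Gamma> (cc g \<omega> \<Gamma> \<mu> \<nu> \<gamma>) (dx \<gamma>)) UNIV \<kappa>) x"
  proof -
    have e2: "(if P then a else 0) * b = (if P then a * b else (0::real))" for P a b by simp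
    show ?thesis by (simp add: qrmult_def qlmult_def fs_def qsum_def cc_def gt_def e2)
  qed
  have L: "snd (qrmult \<omega> \<Gamma> (dx \<mu>) (gt g \<omega> \<Gamma> \<mu> \<nu>) \<kappa>) x =
     (if \<kappa> = \<mu> then 1/2 * hq g \<omega> \<Gamma> \<mu> \<nu> x else 0) + 1/2 * (\<Sum>\<alpha>\<in>UNIV. \<Sum>\<beta>\<in>UNIV. \<omega> \<alpha> \<beta> x * pd \<alpha> (g \<mu> \<nu>) x * \<Gamma> \<mu> \<beta> \<kappa> x)"
    by (simp add: qrmult_def gt_def cov1_dx cov1_dx' sum_negf)
  have R: "snd (fs (\<lambda>\<gamma>. qlmult \<omega> \<Gamma> (cc g \<omega> \<Gamma> \<mu> \<nu> \<gamma>) (dx \<gamma>)) UNIV \<kappa>) x =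
     (\<Sum>\<gamma>\<in>UNIV. (if \<kappa> = \<gamma> then snd (cc g \<omega> \<Gamma> \<mu> \<nu> \<gamma>) x else 0)
        - (if \<gamma> = \<mu> then 1/2 * (\<Sum>\<alpha>\<in>UNIV. \<Sum>\<beta>\<in>UNIV. \<omega> \<alpha> \<beta> x * pd \<alpha> (g \<mu> \<nu>) x * \<Gamma> \<mu> \<beta> \<kappa> x) else 0))"
    unfolding fs_def qsum_def snd_conv
    by (rule sum.cong) (auto simp: qlmult_def cov1_dx cov1_dx' sum_negf cc_def pd_if)
  show "snd (qrmult \<omega> \<Gamma> (dx \<mu>) (gt g \<omega> \<Gamma> \<mu> \<nu>) \<kappa>) x = snd (fs (\<lambda>\<gamma>. qlmult \<omega> \<Gamma> (cc g \<omega> \<Gamma> \<mu> \<nu> \<gamma>) (dx \<gamma>)) UNIV \<kappa>) x"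
    unfolding L R by (simp add: sum_subtractf cc_def)
qed



lemma sum4_swap:
  "(\<Sum>a\<in>A. \<Sum>b\<in>B. \<Sum>c\<in>C. \<Sum>d\<in>D. f a b c d) = (\<Sum>c\<in>C. \<Sum>d\<in>D. \<Sum>a\<in>A. \<Sum>b\<in>B. f a b c d)"
proof -
  have "(\<Sum>a\<in>A. \<Sum>b\<in>B. \<Sum>c\<in>C. \<Sum>d\<in>D. f a b c d) = (\<Sum>a\<in>A. \<Sum>c\<in>C. \<Sum>b\<in>B. \<Sum>d\<in>D. f a b c d)"
    by (rule sum.cong[OF refl], rule sum.swap)
  also have "\<dots> = (\<Sum>c\<in>C. \<Sum>a\<in>A. \<Sum>b\<in>B. \<Sum>d\<in>D. f a b c d)"
    by (rule sum.swap)
  also have "\<dots> = (\<Sum>c\<in>C. \<Sum>a\<in>A. \<Sum>d\<in>D. \<Sum>b\<in>B. f a b c d)"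
    by (rule sum.cong[OF refl], rule sum.cong[OF refl], rule sum.swap)
  also have "\<dots> = (\<Sum>c\<in>C. \<Sum>d\<in>D. \<Sum>a\<in>A. \<Sum>b\<in>B. f a b c d)"
    by (rule sum.cong[OF refl], rule sum.swap)
  finally show ?thesis .
qed

lemma sum_pull2:
  "(\<Sum>i\<in>A. \<Sum>a\<in>B. \<Sum>b\<in>C. f i a b) = (\<Sum>a\<in>B. \<Sum>b\<in>C. \<Sum>i\<in>A. f i a b)"
proof -
  have "(\<Sum>i\<in>A. \<Sum>a\<in>B. \<Sum>b\<in>C. f i a b) = (\<Sum>a\<in>B. \<Sum>i\<in>A. \<Sum>b\<in>C. f i a b)"
    by (rule sum.swap)
  also have "\<dots> = (\<Sum>a\<in>B. \<Sum>b\<in>C. \<Sum>i\<in>A. f i a b)"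
    by (rule sum.cong[OF refl], rule sum.swap)
  finally show ?thesis .
qed

lemma antisym_zero:
  fixes w Q :: "'n::finite \<Rightarrow> 'n \<Rightarrow> real"
  assumes "\<And>\<alpha> \<beta>. w \<alpha> \<beta> = - w \<beta> \<alpha>" "\<And>\<alpha> \<beta>. Q \<alpha> \<beta> = Q \<beta> \<alpha>"
  shows "(\<Sum>\<alpha>\<in>UNIV. \<Sum>\<beta>\<in>UNIV. w \<alpha> \<beta> * Q \<alpha> \<beta>) = 0"
proof -
  let ?S = "(\<Sum>\<alpha>\<in>UNIV. \<Sum>\<beta>\<in>UNIV. w \<alpha> \<beta> * Q \<alpha> \<beta>)"
  have "?S = (\<Sum>\<beta>\<in>UNIV. \<Sum>\<alpha>\<in>UNIV. w \<alpha> \<beta> * Q \<alpha> \<beta>)" by (rule sum.swap)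
  also have "\<dots> = (\<Sum>\<beta>\<in>UNIV. \<Sum>\<alpha>\<in>UNIV. - (w \<beta> \<alpha> * Q \<beta> \<alpha>))"
  proof (intro sum.cong refl)
    fix \<alpha> \<beta> show "w \<alpha> \<beta> * Q \<alpha> \<beta> = - (w \<beta> \<alpha> * Q \<beta> \<alpha>)"
      using assms(1)[of \<alpha> \<beta>] assms(2)[of \<alpha> \<beta>] by simp
  qed
  also have "\<dots> = - ?S" by (simp add: sum_negf)
  finally show ?thesis by linarith
qed

lemma key_alg:
  fixes w Gz I :: "'n::finite \<Rightarrow> 'n \<Rightarrow> real" and gd Id Gm :: "'n \<Rightarrow> 'n \<Rightarrow> 'n \<Rightarrow> real"
  assumes wa: "\<And>\<alpha> \<beta>. w \<alpha> \<beta> = - w \<beta> \<alpha>"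
    and Isym: "\<And>a b. I a b = I b a"
    and gsym: "\<And>a b. Gz a b = Gz b a"
    and gdsym: "\<And>\<alpha> a b. gd \<alpha> a b = gd \<alpha> b a"
    and inv: "\<And>\<mu> k. (\<Sum>a\<in>UNIV. I \<mu> a * Gz a k) = (if k = \<mu> then 1 else 0)"
    and D: "\<And>\<beta> \<rho> \<gamma>. Id \<beta> \<rho> \<gamma> = - (\<Sum>\<mu>\<in>UNIV. \<Sum>\<nu>\<in>UNIV. I \<rho> \<mu> * gd \<beta> \<mu> \<nu> * I \<nu> \<gamma>)"
    and MC: "\<And>\<beta> \<mu> \<nu>. gd \<beta> \<mu> \<nu> = (\<Sum>k\<in>UNIV. Gz \<mu> k * Gm k \<beta> \<nu>) + (\<Sum>k\<in>UNIV. Gz \<nu> k * Gm k \<beta> \<mu>)"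
  shows "(\<Sum>\<mu>\<in>UNIV. \<Sum>\<nu>\<in>UNIV. \<Sum>\<alpha>\<in>UNIV. \<Sum>\<beta>\<in>UNIV. w \<alpha> \<beta> * gd \<alpha> \<mu> \<nu> * Id \<beta> \<mu> \<nu>) = 0"
    and "(\<Sum>\<mu>\<in>UNIV. \<Sum>\<nu>\<in>UNIV. \<Sum>\<gamma>\<in>UNIV.
            (\<Sum>\<alpha>\<in>UNIV. \<Sum>\<beta>\<in>UNIV. w \<alpha> \<beta> * gd \<alpha> \<mu> \<nu> * Gm \<mu> \<beta> \<gamma>) * I \<gamma> \<nu>) = 0"
proof -
  define Q where "Q \<alpha> \<beta> = (\<Sum>\<mu>\<in>UNIV. \<Sum>\<nu>\<in>UNIV. \<Sum>a\<in>UNIV. \<Sum>b\<in>UNIV.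
        gd \<alpha> \<mu> \<nu> * I \<mu> a * gd \<beta> a b * I b \<nu>)" for \<alpha> \<beta>
  have Qsym: "Q \<alpha> \<beta> = Q \<beta> \<alpha>" for \<alpha> \<beta>
  proof -
    have "Q \<beta> \<alpha> = (\<Sum>a\<in>UNIV. \<Sum>b\<in>UNIV. \<Sum>\<mu>\<in>UNIV. \<Sum>\<nu>\<in>UNIV.
        gd \<beta> a b * I a \<mu> * gd \<alpha> \<mu> \<nu> * I \<nu> b)" by (simp add: Q_def)
    also have "\<dots> = (\<Sum>\<mu>\<in>UNIV. \<Sum>\<nu>\<in>UNIV. \<Sum>a\<in>UNIV. \<Sum>b\<in>UNIV.
        gd \<beta> a b * I a \<mu> * gd \<alpha> \<mu> \<nu> * I \<nu> b)" by (rule sum4_swap)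
    also have "\<dots> = Q \<alpha> \<beta>" unfolding Q_def
      by (intro sum.cong refl) (simp add: Isym[of a \<mu> for a \<mu>] Isym[of \<nu> b for \<nu> b] ac_simps)
    finally show ?thesis by simp
  qed
  have Z: "(\<Sum>\<alpha>\<in>UNIV. \<Sum>\<beta>\<in>UNIV. w \<alpha> \<beta> * Q \<alpha> \<beta>) = 0"
    by (rule antisym_zero[OF wa Qsym])
  have SQ: "(\<Sum>\<mu>\<in>UNIV. \<Sum>\<nu>\<in>UNIV. gd \<alpha> \<mu> \<nu> * Id \<beta> \<mu> \<nu>) = - Q \<alpha> \<beta>" for \<alpha> \<beta>
    unfolding Q_def D by (simp add: sum_distrib_left sum_negf mult.assoc)
  show "(\<Sum>\<mu>\<in>UNIV. \<Sum>\<nu>\<in>UNIV. \<Sum>\<alpha>\<in>UNIV. \<Sum>\<beta>\<in>UNIV. w \<alpha> \<beta> * gd \<alpha> \<mu> \<nu> * Id \<beta> \<mu> \<nu>) = 0"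
  proof -
    have "(\<Sum>\<mu>\<in>UNIV. \<Sum>\<nu>\<in>UNIV. \<Sum>\<alpha>\<in>UNIV. \<Sum>\<beta>\<in>UNIV. w \<alpha> \<beta> * gd \<alpha> \<mu> \<nu> * Id \<beta> \<mu> \<nu>)
       = (\<Sum>\<alpha>\<in>UNIV. \<Sum>\<beta>\<in>UNIV. \<Sum>\<mu>\<in>UNIV. \<Sum>\<nu>\<in>UNIV. w \<alpha> \<beta> * (gd \<alpha> \<mu> \<nu> * Id \<beta> \<mu> \<nu>))"
      by (subst sum4_swap) (simp add: mult.assoc)
    also have "\<dots> = (\<Sum>\<alpha>\<in>UNIV. \<Sum>\<beta>\<in>UNIV. w \<alpha> \<beta> * (- Q \<alpha> \<beta>))"
      by (simp add: sum_distrib_left[symmetric] SQ)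
    also have "\<dots> = 0" using Z by (simp add: sum_negf)
    finally show ?thesis .
  qed
  define Y where "Y \<alpha> \<beta> = (\<Sum>\<mu>\<in>UNIV. \<Sum>\<nu>\<in>UNIV. \<Sum>b\<in>UNIV. gd \<alpha> \<mu> \<nu> * Gm \<mu> \<beta> b * I b \<nu>)" for \<alpha> \<beta>
  have in1: "(\<Sum>a\<in>UNIV. I \<mu> a * (\<Sum>k\<in>UNIV. Gz a k * Gm k \<beta> b)) = Gm \<mu> \<beta> b" for \<mu> \<beta> b
  proof -
    have "(\<Sum>a\<in>UNIV. I \<mu> a * (\<Sum>k\<in>UNIV. Gz a k * Gm k \<beta> b))
        = (\<Sum>a\<in>UNIV. \<Sum>k\<in>UNIV. I \<mu> a * Gz a k * Gm k \<beta> b)"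
      by (simp add: sum_distrib_left mult.assoc)
    also have "\<dots> = (\<Sum>k\<in>UNIV. \<Sum>a\<in>UNIV. I \<mu> a * Gz a k * Gm k \<beta> b)" by (rule sum.swap)
    also have "\<dots> = (\<Sum>k\<in>UNIV. (\<Sum>a\<in>UNIV. I \<mu> a * Gz a k) * Gm k \<beta> b)"
      by (simp add: sum_distrib_right)
    also have "\<dots> = Gm \<mu> \<beta> b"
    proof -
      have e: "(if P then 1 else 0) * t = (if P then t else (0::real))" for P t by simp
      show ?thesis by (simp add: inv e)
    qed
    finally show ?thesis .
  qed
  have in2: "(\<Sum>b\<in>UNIV. (\<Sum>k\<in>UNIV. Gz b k * Gm k \<beta> a) * I b \<nu>) = Gm \<nu> \<beta> a" for \<nu> \<beta> a
  proof -
    have "(\<Sum>b\<in>UNIV. (\<Sum>k\<in>UNIV. Gz b k * Gm k \<beta> a) * I b \<nu>) = (\<Sum>b\<in>UNIV. I \<nu> b * (\<Sum>k\<in>UNIV. Gz b k * Gm k \<beta> a))"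
      by (simp add: Isym[of _ \<nu>] mult.commute)
    then show ?thesis using in1 by simp
  qed
  have QY: "Q \<alpha> \<beta> = 2 * Y \<alpha> \<beta>" for \<alpha> \<beta>
  proof -
    have Q1: "(\<Sum>\<mu>\<in>UNIV. \<Sum>\<nu>\<in>UNIV. \<Sum>a\<in>UNIV. \<Sum>b\<in>UNIV.
        gd \<alpha> \<mu> \<nu> * I \<mu> a * (\<Sum>k\<in>UNIV. Gz a k * Gm k \<beta> b) * I b \<nu>) = Y \<alpha> \<beta>"
    proof -
      have "(\<Sum>a\<in>UNIV. \<Sum>b\<in>UNIV. gd \<alpha> \<mu> \<nu> * I \<mu> a * (\<Sum>k\<in>UNIV. Gz a k * Gm k \<beta> b) * I b \<nu>)
          = (\<Sum>b\<in>UNIV. gd \<alpha> \<mu> \<nu> * Gm \<mu> \<beta> b * I b \<nu>)" for \<mu> \<nu>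
      proof -
        have "(\<Sum>a\<in>UNIV. \<Sum>b\<in>UNIV. gd \<alpha> \<mu> \<nu> * I \<mu> a * (\<Sum>k\<in>UNIV. Gz a k * Gm k \<beta> b) * I b \<nu>)
          = (\<Sum>b\<in>UNIV. \<Sum>a\<in>UNIV. gd \<alpha> \<mu> \<nu> * I \<mu> a * (\<Sum>k\<in>UNIV. Gz a k * Gm k \<beta> b) * I b \<nu>)"
          by (rule sum.swap)
        also have "\<dots> = (\<Sum>b\<in>UNIV. gd \<alpha> \<mu> \<nu> * (\<Sum>a\<in>UNIV. I \<mu> a * (\<Sum>k\<in>UNIV. Gz a k * Gm k \<beta> b)) * I b \<nu>)"
          by (simp add: sum_distrib_left sum_distrib_right mult.assoc)
        finally show ?thesis by (simp add: in1)
      qed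
      then show ?thesis by (simp add: Y_def)
    qed
    have Q2: "(\<Sum>\<mu>\<in>UNIV. \<Sum>\<nu>\<in>UNIV. \<Sum>a\<in>UNIV. \<Sum>b\<in>UNIV.
        gd \<alpha> \<mu> \<nu> * I \<mu> a * (\<Sum>k\<in>UNIV. Gz b k * Gm k \<beta> a) * I b \<nu>) = Y \<alpha> \<beta>"
    proof -
      have "(\<Sum>b\<in>UNIV. gd \<alpha> \<mu> \<nu> * I \<mu> a * (\<Sum>k\<in>UNIV. Gz b k * Gm k \<beta> a) * I b \<nu>)
          = gd \<alpha> \<mu> \<nu> * I \<mu> a * Gm \<nu> \<beta> a" for \<mu> \<nu> a
      proof -
        have "(\<Sum>b\<in>UNIV. gd \<alpha> \<mu> \<nu> * I \<mu> a * (\<Sum>k\<in>UNIV. Gz b k * Gm k \<beta> a) * I b \<nu>)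
           = gd \<alpha> \<mu> \<nu> * I \<mu> a * (\<Sum>b\<in>UNIV. (\<Sum>k\<in>UNIV. Gz b k * Gm k \<beta> a) * I b \<nu>)"
          by (simp only: mult.assoc sum_distrib_left[symmetric])
        then show ?thesis by (simp add: in2)
      qed
      then have "(\<Sum>\<mu>\<in>UNIV. \<Sum>\<nu>\<in>UNIV. \<Sum>a\<in>UNIV. \<Sum>b\<in>UNIV.
        gd \<alpha> \<mu> \<nu> * I \<mu> a * (\<Sum>k\<in>UNIV. Gz b k * Gm k \<beta> a) * I b \<nu>)
        = (\<Sum>\<mu>\<in>UNIV. \<Sum>\<nu>\<in>UNIV. \<Sum>a\<in>UNIV. gd \<alpha> \<mu> \<nu> * I \<mu> a * Gm \<nu> \<beta> a)" by simp
      also have "\<dots> = (\<Sum>\<nu>\<in>UNIV. \<Sum>\<mu>\<in>UNIV. \<Sum>a\<in>UNIV. gd \<alpha> \<mu> \<nu> * I \<mu> a * Gm \<nu> \<beta> a)"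
        by (rule sum.swap)
      also have "\<dots> = Y \<alpha> \<beta>" unfolding Y_def
        by (intro sum.cong refl) (simp add: gdsym[of \<alpha> _ ] Isym[of _ a for a] ac_simps)
      finally show ?thesis .
    qed
    have "Q \<alpha> \<beta> = (\<Sum>\<mu>\<in>UNIV. \<Sum>\<nu>\<in>UNIV. \<Sum>a\<in>UNIV. \<Sum>b\<in>UNIV.
        gd \<alpha> \<mu> \<nu> * I \<mu> a * (\<Sum>k\<in>UNIV. Gz a k * Gm k \<beta> b) * I b \<nu>)
      + (\<Sum>\<mu>\<in>UNIV. \<Sum>\<nu>\<in>UNIV. \<Sum>a\<in>UNIV. \<Sum>b\<in>UNIV.
        gd \<alpha> \<mu> \<nu> * I \<mu> a * (\<Sum>k\<in>UNIV. Gz b k * Gm k \<beta> a) * I b \<nu>)"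
      unfolding Q_def MC[of \<beta>]
      by (simp only: sum.distrib[symmetric]) (intro sum.cong refl; simp add: sum.distrib algebra_simps)
    then show ?thesis using Q1 Q2 by simp
  qed
  have "(\<Sum>\<mu>\<in>UNIV. \<Sum>\<nu>\<in>UNIV. \<Sum>\<gamma>\<in>UNIV.
            (\<Sum>\<alpha>\<in>UNIV. \<Sum>\<beta>\<in>UNIV. w \<alpha> \<beta> * gd \<alpha> \<mu> \<nu> * Gm \<mu> \<beta> \<gamma>) * I \<gamma> \<nu>)
     = (\<Sum>\<mu>\<in>UNIV. \<Sum>\<nu>\<in>UNIV. \<Sum>\<gamma>\<in>UNIV. \<Sum>\<alpha>\<in>UNIV. \<Sum>\<beta>\<in>UNIV. w \<alpha> \<beta> * (gd \<alpha> \<mu> \<nu> * Gm \<mu> \<beta> \<gamma> * I \<gamma> \<nu>))"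
    by (simp add: sum_distrib_right mult.assoc)
  also have "\<dots> = (\<Sum>\<mu>\<in>UNIV. \<Sum>\<nu>\<in>UNIV. \<Sum>\<alpha>\<in>UNIV. \<Sum>\<beta>\<in>UNIV. \<Sum>\<gamma>\<in>UNIV. w \<alpha> \<beta> * (gd \<alpha> \<mu> \<nu> * Gm \<mu> \<beta> \<gamma> * I \<gamma> \<nu>))"
    by (intro sum.cong refl sum_pull2)
  also have "\<dots> = (\<Sum>\<alpha>\<in>UNIV. \<Sum>\<beta>\<in>UNIV. \<Sum>\<mu>\<in>UNIV. \<Sum>\<nu>\<in>UNIV. \<Sum>\<gamma>\<in>UNIV. w \<alpha> \<beta> * (gd \<alpha> \<mu> \<nu> * Gm \<mu> \<beta> \<gamma> * I \<gamma> \<nu>))"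
    by (rule sum4_swap)
  also have "\<dots> = (\<Sum>\<alpha>\<in>UNIV. \<Sum>\<beta>\<in>UNIV. w \<alpha> \<beta> * Y \<alpha> \<beta>)"
    by (simp add: Y_def sum_distrib_left)
  also have "\<dots> = (\<Sum>\<alpha>\<in>UNIV. \<Sum>\<beta>\<in>UNIV. (1/2) * (w \<alpha> \<beta> * Q \<alpha> \<beta>))"
    by (simp add: QY)
  also have "\<dots> = (\<Sum>\<alpha>\<in>UNIV. \<Sum>\<beta>\<in>UNIV. w \<alpha> \<beta> * Q \<alpha> \<beta>) / 2"
    by (simp add: sum_divide_distrib)
  also have "\<dots> = 0" by (simp add: Z)
  finally show "(\<Sum>\<mu>\<in>UNIV. \<Sum>\<nu>\<in>UNIV. \<Sum>\<gamma>\<in>UNIV.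
            (\<Sum>\<alpha>\<in>UNIV. \<Sum>\<beta>\<in>UNIV. w \<alpha> \<beta> * gd \<alpha> \<mu> \<nu> * Gm \<mu> \<beta> \<gamma>) * I \<gamma> \<nu>) = 0" .
qed



theorem proposition2p1:
  fixes U :: "(real^'n::finite) set"
    and g ginv \<omega> :: "'n \<Rightarrow> 'n \<Rightarrow> 'n fn"
    and \<Gamma> :: "'n \<Rightarrow> 'n \<Rightarrow> 'n \<Rightarrow> 'n fn"
    and gtinv :: "'n \<Rightarrow> 'n \<Rightarrow> 'n qf"
    and B :: "'n form \<Rightarrow> 'n form \<Rightarrow> 'n qf"
  assumes U_open: "open U"
    and g_smooth: "\<And>\<mu> \<nu>. Cinf_on U (g \<mu> \<nu>)"
    and ginv_smooth: "\<And>\<mu> \<nu>. Cinf_on U (ginv \<mu> \<nu>)"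
    and \<omega>_smooth: "\<And>\<alpha> \<beta>. Cinf_on U (\<omega> \<alpha> \<beta>)"
    and \<Gamma>_smooth: "\<And>\<alpha> \<beta> \<gamma>. Cinf_on U (\<Gamma> \<alpha> \<beta> \<gamma>)"
    and g_sym: "\<And>\<mu> \<nu> x. x \<in> U \<Longrightarrow> g \<mu> \<nu> x = g \<nu> \<mu> x"
    and ginv_right: "\<And>\<mu> \<gamma> x. x \<in> U \<Longrightarrow>
          (\<Sum>\<nu>\<in>UNIV. g \<mu> \<nu> x * ginv \<nu> \<gamma> x) = (if \<mu> = \<gamma> then 1 else 0)"
    and ginv_left: "\<And>\<mu> \<gamma> x. x \<in> U \<Longrightarrow>
          (\<Sum>\<nu>\<in>UNIV. ginv \<gamma> \<nu> x * g \<nu> \<mu> x) = (if \<mu> = \<gamma> then 1 else 0)"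
    and metric_compat: "\<And>\<mu> \<nu> \<beta> x. x \<in> U \<Longrightarrow>
          pd \<beta> (g \<mu> \<nu>) x = Glow g \<Gamma> \<mu> \<beta> \<nu> x + Glow g \<Gamma> \<nu> \<beta> \<mu> x"
    and \<omega>_antisym: "\<And>\<alpha> \<beta> x. x \<in> U \<Longrightarrow> \<omega> \<alpha> \<beta> x = - \<omega> \<beta> \<alpha> x"
    and jacobi: "\<And>f h k x. Cinf_on U f \<Longrightarrow> Cinf_on U h \<Longrightarrow> Cinf_on U k \<Longrightarrow> x \<in> U \<Longrightarrow>
          pbr \<omega> f (pbr \<omega> h k) x + pbr \<omega> h (pbr \<omega> k f) x + pbr \<omega> k (pbr \<omega> f h) x = 0"
    and poisson_compat: "\<And>\<alpha> \<beta> \<gamma> x. x \<in> U \<Longrightarrow>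
          pd \<gamma> (\<omega> \<alpha> \<beta>) x
          + (\<Sum>\<delta>\<in>UNIV. \<Gamma> \<alpha> \<gamma> \<delta> x * \<omega> \<delta> \<beta> x + \<Gamma> \<beta> \<gamma> \<delta> x * \<omega> \<alpha> \<delta> x)
          + (\<Sum>\<delta>\<in>UNIV. torsion \<Gamma> \<alpha> \<delta> \<gamma> x * \<omega> \<delta> \<beta> x + torsion \<Gamma> \<beta> \<delta> \<gamma> x * \<omega> \<alpha> \<delta> x) = 0"
    and gtinv_smooth: "\<And>\<mu> \<nu>. qsmooth U (gtinv \<mu> \<nu>)"
    and gtinv_right: "\<And>\<mu> \<gamma>. qeqU U
          (qsum (\<lambda>\<nu>. qmult \<omega> (gt g \<omega> \<Gamma> \<mu> \<nu>) (gtinv \<nu> \<gamma>)) UNIV)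
          ((\<lambda>x. if \<mu> = \<gamma> then 1 else 0), (\<lambda>x. 0))"
    and gtinv_left: "\<And>\<mu> \<gamma>. qeqU U
          (qsum (\<lambda>\<nu>. qmult \<omega> (gtinv \<gamma> \<nu>) (gt g \<omega> \<Gamma> \<nu> \<mu>)) UNIV)
          ((\<lambda>x. if \<mu> = \<gamma> then 1 else 0), (\<lambda>x. 0))"
    and B_add_left: "\<And>\<eta> \<eta>' \<zeta>. fsmooth U \<eta> \<Longrightarrow> fsmooth U \<eta>' \<Longrightarrow> fsmooth U \<zeta> \<Longrightarrow>
          qeqU U (B (fadd \<eta> \<eta>') \<zeta>) (qadd (B \<eta> \<zeta>) (B \<eta>' \<zeta>))"
    and B_add_right: "\<And>\<eta> \<zeta> \<zeta>'. fsmooth U \<eta> \<Longrightarrow> fsmooth U \<zeta> \<Longrightarrow> fsmooth U \<zeta>' \<Longrightarrow>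
          qeqU U (B \<eta> (fadd \<zeta> \<zeta>')) (qadd (B \<eta> \<zeta>) (B \<eta> \<zeta>'))"
    and B_balanced: "\<And>\<eta> f \<zeta>. fsmooth U \<eta> \<Longrightarrow> qsmooth U f \<Longrightarrow> fsmooth U \<zeta> \<Longrightarrow>
          qeqU U (B (qrmult \<omega> \<Gamma> \<eta> f) \<zeta>) (B \<eta> (qlmult \<omega> \<Gamma> f \<zeta>))"
    and B_bimodule: "\<And>f \<eta> \<zeta> k. qsmooth U f \<Longrightarrow> fsmooth U \<eta> \<Longrightarrow> fsmooth U \<zeta> \<Longrightarrow> qsmooth U k \<Longrightarrow>
          qeqU U (B (qlmult \<omega> \<Gamma> f \<eta>) (qrmult \<omega> \<Gamma> \<zeta> k)) (qmult \<omega> (qmult \<omega> f (B \<eta> \<zeta>)) k)"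
    and B_dx: "\<And>\<mu> \<nu>. qeqU U (B (dx \<mu>) (dx \<nu>)) (gtinv \<mu> \<nu>)"
  shows "qeqU U
          (qsum (\<lambda>\<mu>. qsum (\<lambda>\<nu>. B (qrmult \<omega> \<Gamma> (dx \<mu>) (gt g \<omega> \<Gamma> \<mu> \<nu>)) (dx \<nu>)) UNIV) UNIV)
          ((\<lambda>x. real CARD('n)),
           (\<lambda>x. 1/2 * (\<Sum>\<mu>\<in>UNIV. \<Sum>\<nu>\<in>UNIV. pbr \<omega> (g \<mu> \<nu>) (ginv \<mu> \<nu>) x)))"
proof -
  note o = U_open
  have e2: "(if P then a else 0) * b = (if P then a * b else (0::real))" for P a b by simp
  have e3: "b * (if P then a else 0) = (if P then b * a else (0::real))" for P a b by simp
  have hsm: "Cinf_on U (hq g \<omega> \<Gamma> \<mu> \<nu>)" for \<mu> \<nu>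
    by (rule smooth_hq[OF o g_smooth \<omega>_smooth \<Gamma>_smooth])
  have hs: "qsmooth U (cc g \<omega> \<Gamma> \<mu> \<nu> \<gamma>)" for \<mu> \<nu> \<gamma>
  proof -
    have "Cinf_on U (\<lambda>x. if \<gamma> = \<mu> then g \<mu> \<nu> x else 0)" by (intro Cinf_if g_smooth)
    moreover have "Cinf_on U (\<lambda>x. (if \<gamma> = \<mu> then 1/2 * hq g \<omega> \<Gamma> \<mu> \<nu> x else 0)
          + (\<Sum>\<alpha>\<in>UNIV. \<Sum>\<beta>\<in>UNIV. \<omega> \<alpha> \<beta> x * pd \<alpha> (g \<mu> \<nu>) x * \<Gamma> \<mu> \<beta> \<gamma> x))"
      by (intro Cinf_rules o g_smooth \<omega>_smooth \<Gamma>_smooth hsm; simp)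
    ultimately show ?thesis unfolding qsmooth_def cc_def by simp
  qed
  have Fs: "fsmooth U (qlmult \<omega> \<Gamma> (cc g \<omega> \<Gamma> \<mu> \<nu> \<gamma>) (dx \<gamma>))" for \<mu> \<nu> \<gamma>
    by (rule fsmooth_qlmult[OF o \<omega>_smooth \<Gamma>_smooth hs fsmooth_dx])
  have step1: "qeqU U (B (qrmult \<omega> \<Gamma> (dx \<mu>) (gt g \<omega> \<Gamma> \<mu> \<nu>)) (dx \<nu>))
      (qsum (\<lambda>\<gamma>. qmult \<omega> (cc g \<omega> \<Gamma> \<mu> \<nu> \<gamma>) (gtinv \<gamma> \<nu>)) UNIV)" for \<mu> \<nu>
  proof -
    have a: "qeqU U (B (qrmult \<omega> \<Gamma> (dx \<mu>) (gt g \<omega> \<Gamma> \<mu> \<nu>)) (dx \<nu>))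
        (qsum (\<lambda>\<gamma>. B (qlmult \<omega> \<Gamma> (cc g \<omega> \<Gamma> \<mu> \<nu> \<gamma>) (dx \<gamma>)) (dx \<nu>)) UNIV)"
      unfolding form_id
      by (rule B_fs[where U=U and B=B and \<zeta>="dx \<nu>", OF B_add_left fsmooth_dx o finite_class.finite_UNIV Fs])
    have b: "qeqU U (B (qlmult \<omega> \<Gamma> (cc g \<omega> \<Gamma> \<mu> \<nu> \<gamma>) (dx \<gamma>)) (dx \<nu>))
        (qmult \<omega> (cc g \<omega> \<Gamma> \<mu> \<nu> \<gamma>) (gtinv \<gamma> \<nu>))" for \<gamma>
    proof -
      have "qeqU U (B (qlmult \<omega> \<Gamma> (cc g \<omega> \<Gamma> \<mu> \<nu> \<gamma>) (dx \<gamma>)) (qrmult \<omega> \<Gamma> (dx \<nu>) one))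
          (qmult \<omega> (qmult \<omega> (cc g \<omega> \<Gamma> \<mu> \<nu> \<gamma>) (B (dx \<gamma>) (dx \<nu>))) one)"
        by (rule B_bimodule[OF hs fsmooth_dx fsmooth_dx qsmooth_one])
      then have "qeqU U (B (qlmult \<omega> \<Gamma> (cc g \<omega> \<Gamma> \<mu> \<nu> \<gamma>) (dx \<gamma>)) (dx \<nu>))
          (qmult \<omega> (cc g \<omega> \<Gamma> \<mu> \<nu> \<gamma>) (B (dx \<gamma>) (dx \<nu>)))"
        by (simp only: qrmult_one qmult_one)
      moreover have "qeqU U (qmult \<omega> (cc g \<omega> \<Gamma> \<mu> \<nu> \<gamma>) (B (dx \<gamma>) (dx \<nu>)))
          (qmult \<omega> (cc g \<omega> \<Gamma> \<mu> \<nu> \<gamma>) (gtinv \<gamma> \<nu>))"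
        by (rule qmult_cong2[OF o B_dx])
      ultimately show ?thesis by (rule qeqU_trans)
    qed
    have "qeqU U (qsum (\<lambda>\<gamma>. B (qlmult \<omega> \<Gamma> (cc g \<omega> \<Gamma> \<mu> \<nu> \<gamma>) (dx \<gamma>)) (dx \<nu>)) UNIV)
        (qsum (\<lambda>\<gamma>. qmult \<omega> (cc g \<omega> \<Gamma> \<mu> \<nu> \<gamma>) (gtinv \<gamma> \<nu>)) UNIV)"
      by (rule qsum_cong, rule b)
    with a show ?thesis by (rule qeqU_trans)
  qed
  have step2: "qeqU U
          (qsum (\<lambda>\<mu>. qsum (\<lambda>\<nu>. B (qrmult \<omega> \<Gamma> (dx \<mu>) (gt g \<omega> \<Gamma> \<mu> \<nu>)) (dx \<nu>)) UNIV) UNIV)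
          (qsum (\<lambda>\<mu>. qsum (\<lambda>\<nu>. qsum (\<lambda>\<gamma>. qmult \<omega> (cc g \<omega> \<Gamma> \<mu> \<nu> \<gamma>) (gtinv \<gamma> \<nu>)) UNIV) UNIV) UNIV)"
    by (intro qsum_cong step1)
  define Gf where "Gf \<gamma> \<nu> = fst (gtinv \<gamma> \<nu>)" for \<gamma> \<nu>
  define Kf where "Kf \<gamma> \<nu> = snd (gtinv \<gamma> \<nu>)" for \<gamma> \<nu>
  have ginv_sym: "ginv a b x = ginv b a x" if x: "x \<in> U" for a b x
  proof -
    have "ginv a b x = (\<Sum>\<mu>\<in>UNIV. ginv a \<mu> x * (if \<mu> = b then 1 else 0))" by (simp add: e3)
    also have "\<dots> = (\<Sum>\<mu>\<in>UNIV. ginv a \<mu> x * (\<Sum>\<nu>\<in>UNIV. ginv b \<nu> x * g \<mu> \<nu> x))"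
    proof -
      have gl: "(\<Sum>\<nu>\<in>UNIV. ginv b \<nu> x * g \<mu> \<nu> x) = (if \<mu> = b then 1 else 0)" for \<mu>
      proof -
        have "(\<Sum>\<nu>\<in>UNIV. ginv b \<nu> x * g \<mu> \<nu> x) = (\<Sum>\<nu>\<in>UNIV. ginv b \<nu> x * g \<nu> \<mu> x)"
          by (intro sum.cong refl, subst g_sym[OF x], rule refl)
        then show ?thesis using ginv_left[OF x, of b \<mu>] by simp
      qed
      show ?thesis by (simp add: gl)
    qed
    also have "\<dots> = (\<Sum>\<nu>\<in>UNIV. ginv b \<nu> x * (\<Sum>\<mu>\<in>UNIV. ginv a \<mu> x * g \<mu> \<nu> x))"
      by (simp add: sum_distrib_left sum_distrib_right ac_simps) (rule sum.swap)
    also have "\<dots> = (\<Sum>\<nu>\<in>UNIV. ginv b \<nu> x * (if \<nu> = a then 1 else 0))"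
      using ginv_left[OF x] by simp
    also have "\<dots> = ginv b a x" by (simp add: e3)
    finally show ?thesis .
  qed
  have G_ginv: "Gf a b x = ginv a b x" if x: "x \<in> U" for a b x
  proof -
    have R0: "(\<Sum>\<nu>\<in>UNIV. g \<mu> \<nu> x * Gf \<nu> \<gamma> x) = (if \<mu> = \<gamma> then 1 else 0)" for \<mu> \<gamma>
      using gtinv_right[of \<mu> \<gamma>] x by (simp add: qeqU_def qsum_def qmult_def gt_def Gf_def)
    have "ginv a b x = (\<Sum>\<mu>\<in>UNIV. ginv a \<mu> x * (if \<mu> = b then 1 else 0))" by (simp add: e3)
    also have "\<dots> = (\<Sum>\<mu>\<in>UNIV. ginv a \<mu> x * (\<Sum>\<nu>\<in>UNIV. g \<mu> \<nu> x * Gf \<nu> b x))"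
      using R0 by simp
    also have "\<dots> = (\<Sum>\<nu>\<in>UNIV. (\<Sum>\<mu>\<in>UNIV. ginv a \<mu> x * g \<mu> \<nu> x) * Gf \<nu> b x)"
      by (simp add: sum_distrib_left sum_distrib_right ac_simps) (rule sum.swap)
    also have "\<dots> = (\<Sum>\<nu>\<in>UNIV. (if \<nu> = a then 1 else 0) * Gf \<nu> b x)"
      using ginv_left[OF x] by simp
    also have "\<dots> = Gf a b x" by (simp add: e2)
    finally show ?thesis by simp
  qed
  have gd_sym: "pd \<alpha> (g a b) x = pd \<alpha> (g b a) x" if x: "x \<in> U" for \<alpha> a b x
    by (rule pd_cong[OF o x g_sym])
  have D: "pd \<beta> (ginv \<rho> \<gamma>) x = - (\<Sum>\<mu>\<in>UNIV. \<Sum>\<nu>\<in>UNIV. ginv \<rho> \<mu> x * pd \<beta> (g \<mu> \<nu>) x * ginv \<nu> \<gamma> x)"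
    if x: "x \<in> U" for \<beta> \<rho> \<gamma> x
  proof -
    have E1: "(\<Sum>\<nu>\<in>UNIV. g \<mu> \<nu> x * pd \<beta> (ginv \<nu> \<gamma>) x) = - (\<Sum>\<nu>\<in>UNIV. pd \<beta> (g \<mu> \<nu>) x * ginv \<nu> \<gamma> x)" for \<mu>
    proof -
      have "pd \<beta> (\<lambda>y. \<Sum>\<nu>\<in>UNIV. g \<mu> \<nu> y * ginv \<nu> \<gamma> y) x = pd \<beta> (\<lambda>y. if \<mu> = \<gamma> then 1 else 0) x"
        by (rule pd_cong[OF o x ginv_right])
      also have "\<dots> = 0" by simp
      finally have z: "pd \<beta> (\<lambda>y. \<Sum>\<nu>\<in>UNIV. g \<mu> \<nu> y * ginv \<nu> \<gamma> y) x = 0" .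
      have "pd \<beta> (\<lambda>y. \<Sum>\<nu>\<in>UNIV. g \<mu> \<nu> y * ginv \<nu> \<gamma> y) x
          = (\<Sum>\<nu>\<in>UNIV. pd \<beta> (\<lambda>y. g \<mu> \<nu> y * ginv \<nu> \<gamma> y) x)"
        by (rule pd_sum) (auto intro!: differentiable_mult Cinf_diff[OF g_smooth x] Cinf_diff[OF ginv_smooth x])
      also have "\<dots> = (\<Sum>\<nu>\<in>UNIV. pd \<beta> (g \<mu> \<nu>) x * ginv \<nu> \<gamma> x + g \<mu> \<nu> x * pd \<beta> (ginv \<nu> \<gamma>) x)"
        by (intro sum.cong refl pd_mult Cinf_diff[OF g_smooth x] Cinf_diff[OF ginv_smooth x])
      finally show ?thesis using z by (simp add: sum.distrib eq_neg_iff_add_eq_0 add.commute)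
    qed
    have "pd \<beta> (ginv \<rho> \<gamma>) x = (\<Sum>\<nu>\<in>UNIV. (if \<nu> = \<rho> then 1 else 0) * pd \<beta> (ginv \<nu> \<gamma>) x)"
      by (simp add: e2)
    also have "\<dots> = (\<Sum>\<nu>\<in>UNIV. (\<Sum>\<mu>\<in>UNIV. ginv \<rho> \<mu> x * g \<mu> \<nu> x) * pd \<beta> (ginv \<nu> \<gamma>) x)"
      using ginv_left[OF x] by simp
    also have "\<dots> = (\<Sum>\<mu>\<in>UNIV. ginv \<rho> \<mu> x * (\<Sum>\<nu>\<in>UNIV. g \<mu> \<nu> x * pd \<beta> (ginv \<nu> \<gamma>) x))"
      by (simp add: sum_distrib_left sum_distrib_right ac_simps) (rule sum.swap)
    also have "\<dots> = (\<Sum>\<mu>\<in>UNIV. ginv \<rho> \<mu> x * (- (\<Sum>\<nu>\<in>UNIV. pd \<beta> (g \<mu> \<nu>) x * ginv \<nu> \<gamma> x)))"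
      by (simp only: E1)
    also have "\<dots> = - (\<Sum>\<mu>\<in>UNIV. \<Sum>\<nu>\<in>UNIV. ginv \<rho> \<mu> x * pd \<beta> (g \<mu> \<nu>) x * ginv \<nu> \<gamma> x)"
      by (simp add: sum_distrib_left sum_negf mult.assoc)
    finally show ?thesis .
  qed
  have KA: "(\<Sum>\<mu>\<in>UNIV. \<Sum>\<nu>\<in>UNIV. \<Sum>\<alpha>\<in>UNIV. \<Sum>\<beta>\<in>UNIV. \<omega> \<alpha> \<beta> x * pd \<alpha> (g \<mu> \<nu>) x * pd \<beta> (ginv \<mu> \<nu>) x) = 0
     \<and> (\<Sum>\<mu>\<in>UNIV. \<Sum>\<nu>\<in>UNIV. \<Sum>\<gamma>\<in>UNIV.
            (\<Sum>\<alpha>\<in>UNIV. \<Sum>\<beta>\<in>UNIV. \<omega> \<alpha> \<beta> x * pd \<alpha> (g \<mu> \<nu>) x * \<Gamma> \<mu> \<beta> \<gamma> x) * ginv \<gamma> \<nu> x) = 0"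
    if x: "x \<in> U" for x
  proof -
    have MC: "pd \<beta> (g \<mu> \<nu>) x = (\<Sum>k\<in>UNIV. g \<mu> k x * \<Gamma> k \<beta> \<nu> x) + (\<Sum>k\<in>UNIV. g \<nu> k x * \<Gamma> k \<beta> \<mu> x)" for \<beta> \<mu> \<nu>
      using metric_compat[OF x] by (simp add: Glow_def)
    have inv: "(\<Sum>a\<in>UNIV. ginv \<mu> a x * g a k x) = (if k = \<mu> then 1 else 0)" for \<mu> k
      using ginv_left[OF x] by simp
    show ?thesis
      using key_alg[where w="\<lambda>a b. \<omega> a b x" and I="\<lambda>a b. ginv a b x" and Gz="\<lambda>a b. g a b x"
          and gd="\<lambda>a b c. pd a (g b c) x" and Id="\<lambda>a b c. pd a (ginv b c) x" and Gm="\<lambda>a b c. \<Gamma> a b c x"]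
        \<omega>_antisym[OF x] ginv_sym[OF x] g_sym[OF x] gd_sym[OF x] inv D[OF x] MC
      by blast
  qed
  have step3: "qeqU U
      (qsum (\<lambda>\<mu>. qsum (\<lambda>\<nu>. qsum (\<lambda>\<gamma>. qmult \<omega> (cc g \<omega> \<Gamma> \<mu> \<nu> \<gamma>) (gtinv \<gamma> \<nu>)) UNIV) UNIV) UNIV)
      ((\<lambda>x. real CARD('n)),
           (\<lambda>x. 1/2 * (\<Sum>\<mu>\<in>UNIV. \<Sum>\<nu>\<in>UNIV. pbr \<omega> (g \<mu> \<nu>) (ginv \<mu> \<nu>) x)))"
    unfolding qeqU_def
  proof (intro ballI conjI)
    fix x assume x: "x \<in> U"
    have f1: "fst (qsum (\<lambda>\<mu>. qsum (\<lambda>\<nu>. qsum (\<lambda>\<gamma>. qmult \<omega> (cc g \<omega> \<Gamma> \<mu> \<nu> \<gamma>) (gtinv \<gamma> \<nu>)) UNIV) UNIV) UNIV) x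
        = (\<Sum>\<mu>\<in>UNIV. \<Sum>\<nu>\<in>UNIV. g \<mu> \<nu> x * Gf \<mu> \<nu> x)"
      by (simp add: qsum_def qmult_def cc_def e2 Gf_def)
    also have "\<dots> = (\<Sum>\<mu>\<in>UNIV. \<Sum>\<nu>\<in>UNIV. g \<mu> \<nu> x * ginv \<nu> \<mu> x)"
      by (simp add: G_ginv[OF x] ginv_sym[OF x, of _ \<mu> for \<mu>])
    also have "\<dots> = (\<Sum>\<mu>\<in>(UNIV::'n set). 1)" using ginv_right[OF x] by simp
    finally show "fst (qsum (\<lambda>\<mu>. qsum (\<lambda>\<nu>. qsum (\<lambda>\<gamma>. qmult \<omega> (cc g \<omega> \<Gamma> \<mu> \<nu> \<gamma>) (gtinv \<gamma> \<nu>)) UNIV) UNIV) UNIV) x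
        = fst ((\<lambda>x. real CARD('n)), (\<lambda>x. 1/2 * (\<Sum>\<mu>\<in>UNIV. \<Sum>\<nu>\<in>UNIV. pbr \<omega> (g \<mu> \<nu>) (ginv \<mu> \<nu>) x))) x"
      by simp
    have s1: "snd (qsum (\<lambda>\<mu>. qsum (\<lambda>\<nu>. qsum (\<lambda>\<gamma>. qmult \<omega> (cc g \<omega> \<Gamma> \<mu> \<nu> \<gamma>) (gtinv \<gamma> \<nu>)) UNIV) UNIV) UNIV) x
        = (\<Sum>\<mu>\<in>UNIV. \<Sum>\<nu>\<in>UNIV. g \<mu> \<nu> x * Kf \<mu> \<nu> x + 1/2 * hq g \<omega> \<Gamma> \<mu> \<nu> x * Gf \<mu> \<nu> x
             + 1/2 * pbr \<omega> (g \<mu> \<nu>) (Gf \<mu> \<nu>) x)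
          + (\<Sum>\<mu>\<in>UNIV. \<Sum>\<nu>\<in>UNIV. \<Sum>\<gamma>\<in>UNIV.
            (\<Sum>\<alpha>\<in>UNIV. \<Sum>\<beta>\<in>UNIV. \<omega> \<alpha> \<beta> x * pd \<alpha> (g \<mu> \<nu>) x * \<Gamma> \<mu> \<beta> \<gamma> x) * Gf \<gamma> \<nu> x)"
    proof -
      have inner: "(\<Sum>\<gamma>\<in>UNIV. snd (qmult \<omega> (cc g \<omega> \<Gamma> \<mu> \<nu> \<gamma>) (gtinv \<gamma> \<nu>)) x)
        = (g \<mu> \<nu> x * Kf \<mu> \<nu> x + 1/2 * hq g \<omega> \<Gamma> \<mu> \<nu> x * Gf \<mu> \<nu> x
             + 1/2 * pbr \<omega> (g \<mu> \<nu>) (Gf \<mu> \<nu>) x)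
          + (\<Sum>\<gamma>\<in>UNIV.
            (\<Sum>\<alpha>\<in>UNIV. \<Sum>\<beta>\<in>UNIV. \<omega> \<alpha> \<beta> x * pd \<alpha> (g \<mu> \<nu>) x * \<Gamma> \<mu> \<beta> \<gamma> x) * Gf \<gamma> \<nu> x)" for \<mu> \<nu>
      proof -
        have pt: "snd (qmult \<omega> (cc g \<omega> \<Gamma> \<mu> \<nu> \<gamma>) (gtinv \<gamma> \<nu>)) x
          = (if \<gamma> = \<mu> then g \<mu> \<nu> x * Kf \<mu> \<nu> x + 1/2 * hq g \<omega> \<Gamma> \<mu> \<nu> x * Gf \<mu> \<nu> x
             + 1/2 * pbr \<omega> (g \<mu> \<nu>) (Gf \<mu> \<nu>) x else 0)
            + (\<Sum>\<alpha>\<in>UNIV. \<Sum>\<beta>\<in>UNIV. \<omega> \<alpha> \<beta> x * pd \<alpha> (g \<mu> \<nu>) x * \<Gamma> \<mu> \<beta> \<gamma> x) * Gf \<gamma> \<nu> x" for \<gamma>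
          by (cases "\<gamma> = \<mu>") (simp_all add: qmult_def cc_def Gf_def Kf_def pbr_if pbr_def algebra_simps)
        show ?thesis by (simp only: pt sum.distrib) simp
      qed
      show ?thesis by (simp only: qsum_def snd_conv inner sum.distrib)
    qed
    have Gsym: "Gf a b y = Gf b a y" if "y \<in> U" for a b y using G_ginv ginv_sym that by simp
    have R1: "(\<Sum>\<mu>\<in>UNIV. g \<nu> \<mu> x * Kf \<mu> \<nu> x + 1/2 * hq g \<omega> \<Gamma> \<nu> \<mu> x * Gf \<mu> \<nu> x
             + 1/2 * pbr \<omega> (g \<nu> \<mu>) (Gf \<mu> \<nu>) x) = 0" for \<nu>
      using gtinv_right[of \<nu> \<nu>] x by (simp add: qeqU_def qsum_def qmult_def gt_def Gf_def Kf_def)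
    have A1: "(\<Sum>\<mu>\<in>UNIV. \<Sum>\<nu>\<in>UNIV. g \<mu> \<nu> x * Kf \<mu> \<nu> x) = (\<Sum>\<nu>\<in>UNIV. \<Sum>\<mu>\<in>UNIV. g \<nu> \<mu> x * Kf \<mu> \<nu> x)"
      by (subst sum.swap) (intro sum.cong refl, subst g_sym[OF x], rule refl)
    have A2: "(\<Sum>\<mu>\<in>UNIV. \<Sum>\<nu>\<in>UNIV. 1/2 * hq g \<omega> \<Gamma> \<mu> \<nu> x * Gf \<mu> \<nu> x) = (\<Sum>\<nu>\<in>UNIV. \<Sum>\<mu>\<in>UNIV. 1/2 * hq g \<omega> \<Gamma> \<nu> \<mu> x * Gf \<mu> \<nu> x)"
      by (intro sum.cong refl, subst Gsym[OF x], rule refl)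
    have A3: "(\<Sum>\<mu>\<in>UNIV. \<Sum>\<nu>\<in>UNIV. 1/2 * pbr \<omega> (g \<mu> \<nu>) (Gf \<mu> \<nu>) x) = (\<Sum>\<nu>\<in>UNIV. \<Sum>\<mu>\<in>UNIV. 1/2 * pbr \<omega> (g \<nu> \<mu>) (Gf \<mu> \<nu>) x)"
      by (intro sum.cong refl arg_cong2[where f="(*)"] pbr_cong2[OF o x] Gsym)
    have T1: "(\<Sum>\<mu>\<in>UNIV. \<Sum>\<nu>\<in>UNIV. g \<mu> \<nu> x * Kf \<mu> \<nu> x + 1/2 * hq g \<omega> \<Gamma> \<mu> \<nu> x * Gf \<mu> \<nu> x
             + 1/2 * pbr \<omega> (g \<mu> \<nu>) (Gf \<mu> \<nu>) x) = 0"
    proof -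
      have "(\<Sum>\<mu>\<in>UNIV. \<Sum>\<nu>\<in>UNIV. g \<mu> \<nu> x * Kf \<mu> \<nu> x + 1/2 * hq g \<omega> \<Gamma> \<mu> \<nu> x * Gf \<mu> \<nu> x
             + 1/2 * pbr \<omega> (g \<mu> \<nu>) (Gf \<mu> \<nu>) x)
         = (\<Sum>\<mu>\<in>UNIV. \<Sum>\<nu>\<in>UNIV. g \<mu> \<nu> x * Kf \<mu> \<nu> x)
           + (\<Sum>\<mu>\<in>UNIV. \<Sum>\<nu>\<in>UNIV. 1/2 * hq g \<omega> \<Gamma> \<mu> \<nu> x * Gf \<mu> \<nu> x)
           + (\<Sum>\<mu>\<in>UNIV. \<Sum>\<nu>\<in>UNIV. 1/2 * pbr \<omega> (g \<mu> \<nu>) (Gf \<mu> \<nu>) x)"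
        by (simp only: sum.distrib)
      also have "\<dots> = (\<Sum>\<nu>\<in>UNIV. \<Sum>\<mu>\<in>UNIV. g \<nu> \<mu> x * Kf \<mu> \<nu> x)
           + (\<Sum>\<nu>\<in>UNIV. \<Sum>\<mu>\<in>UNIV. 1/2 * hq g \<omega> \<Gamma> \<nu> \<mu> x * Gf \<mu> \<nu> x)
           + (\<Sum>\<nu>\<in>UNIV. \<Sum>\<mu>\<in>UNIV. 1/2 * pbr \<omega> (g \<nu> \<mu>) (Gf \<mu> \<nu>) x)"
        unfolding A1 A2 A3 ..
      also have "\<dots> = (\<Sum>\<nu>\<in>UNIV. \<Sum>\<mu>\<in>UNIV. g \<nu> \<mu> x * Kf \<mu> \<nu> x + 1/2 * hq g \<omega> \<Gamma> \<nu> \<mu> x * Gf \<mu> \<nu> x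
             + 1/2 * pbr \<omega> (g \<nu> \<mu>) (Gf \<mu> \<nu>) x)"
        by (simp only: sum.distrib)
      also have "\<dots> = 0" by (simp only: R1 sum.neutral_const)
      finally show ?thesis .
    qed
    have T2: "(\<Sum>\<mu>\<in>UNIV. \<Sum>\<nu>\<in>UNIV. \<Sum>\<gamma>\<in>UNIV.
            (\<Sum>\<alpha>\<in>UNIV. \<Sum>\<beta>\<in>UNIV. \<omega> \<alpha> \<beta> x * pd \<alpha> (g \<mu> \<nu>) x * \<Gamma> \<mu> \<beta> \<gamma> x) * Gf \<gamma> \<nu> x) = 0"
      using KA[OF x] by (simp only: G_ginv[OF x])
    have T3: "(\<Sum>\<mu>\<in>UNIV. \<Sum>\<nu>\<in>UNIV. pbr \<omega> (g \<mu> \<nu>) (ginv \<mu> \<nu>) x) = 0"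
      using KA[OF x] by (simp only: pbr_def)
    show "snd (qsum (\<lambda>\<mu>. qsum (\<lambda>\<nu>. qsum (\<lambda>\<gamma>. qmult \<omega> (cc g \<omega> \<Gamma> \<mu> \<nu> \<gamma>) (gtinv \<gamma> \<nu>)) UNIV) UNIV) UNIV) x
        = snd ((\<lambda>x. real CARD('n)), (\<lambda>x. 1/2 * (\<Sum>\<mu>\<in>UNIV. \<Sum>\<nu>\<in>UNIV. pbr \<omega> (g \<mu> \<nu>) (ginv \<mu> \<nu>) x))) x"
      unfolding s1 T1 T2 snd_conv T3 by simp
  qed
  show ?thesis by (rule qeqU_trans[OF step2 step3])
qed


end
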